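(* Let $\mathcal H_X,\mathcal H_Y$ be finite-dimensional Hilbert spaces, let $\ket{\alpha_0},\ket{\alpha_1}\in\mathcal H_X$ be orthonormal, and let $\rho$ be a state on $\mathcal H_X\otimes\mathcal H_Y$ supported on $\operatorname{span}\{\ket{\alpha_0},\ket{\alpha_1}\}\otimes\mathcal H_Y$. Define the operators on $\mathcal H_Y$ $$A=\bra{\alpha_0}\rho\ket{\alpha_0},\qquad B=\bra{\alpha_0}\rho\ket{\alpha_1},$$ and assume that $A=a\ket\phi\bra\phi$ for some unit vector $\ket\phi\in\mathcal H_Y$ and some $a>0$. Then the following are equivalent: (i) $\rho$ is entangled across $X|Y$; (ii) $\rho$ is NPT across $X|Y$; (iii) $P_{\operatorname{supp}A}\,B\,P_{\operatorname{Ker}A}\neq0$; (iv) $\rho$ is projectively steerable from $X$ to $Y$.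
   Context: $P_{\operatorname{supp}A}$ and $P_{\operatorname{Ker}A}$ are the orthogonal projectors onto the support (range) and kernel of $A$. NPT means the partial transpose with respect to $Y$ (in any fixed basis) is not positive semidefinite. For a bipartite state $\rho$ on $\mathcal H_X\otimes\mathcal H_Y$, the projective assemblage from $X$ to $Y$ consists of $\sigma_{a|M}=\operatorname{tr}_X[(\Pi_a\otimes I_Y)\rho]$ for all projective measurements $M=\{\Pi_a\}$ on $\mathcal H_X$. It admits a local hidden state (LHS) model if there exist a probability space $(\Lambda,\mu)$, density matrices $\tau_\lambda$ on $\mathcal H_Y$ (measurable in $\lambda$) and response functions $p(a|M,\lambda)\ge0$ with $\sum_a p(a|M,\lambda)=1$ such that $\sigma_{a|M}=\int_\Lambda p(a|M,\lambda)\tau_\lambda\,d\mu(\lambda)$ for all $M,a$. The state is projectively steerable from $X$ to $Y$ if no such model exists. *)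

theory Defs
  imports "HOL-Probability.Probability"
begin

text \<open>Finite-dimensional Hilbert spaces are modelled as C^I for a finite index
type I (standard orthonormal basis); operators are matrices I x I.\<close>

type_synonym 'i cvec = "'i \<Rightarrow> complex"
type_synonym 'i cmat = "'i \<Rightarrow> 'i \<Rightarrow> complex"

definition inner_c :: "('i::finite) cvec \<Rightarrow> 'i cvec \<Rightarrow> complex" where
  "inner_c u v = (\<Sum>i\<in>UNIV. cnj (u i) * v i)"

definition mat_apply :: "('i::finite) cmat \<Rightarrow> 'i cvec \<Rightarrow> 'i cvec" where
  "mat_apply M v = (\<lambda>i. \<Sum>j\<in>UNIV. M i j * v j)"

definition mmult :: "('i::finite) cmat \<Rightarrow> 'i cmat \<Rightarrow> 'i cmat" where
  "mmult M N = (\<lambda>i k. \<Sum>j\<in>UNIV. M i j * N j k)"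

definition id_mat :: "'i cmat" where
  "id_mat = (\<lambda>i j. if i = j then 1 else 0)"

definition adjoint :: "'i cmat \<Rightarrow> 'i cmat" where
  "adjoint M = (\<lambda>i j. cnj (M j i))"

definition trace_c :: "('i::finite) cmat \<Rightarrow> complex" where
  "trace_c M = (\<Sum>i\<in>UNIV. M i i)"

definition psd :: "('i::finite) cmat \<Rightarrow> bool" where
  "psd M \<longleftrightarrow> (\<forall>v. Im (inner_c v (mat_apply M v)) = 0 \<and> 0 \<le> Re (inner_c v (mat_apply M v)))"

definition density_op :: "('i::finite) cmat \<Rightarrow> bool" where
  "density_op M \<longleftrightarrow> psd M \<and> trace_c M = 1"

definition kron :: "'x cmat \<Rightarrow> 'y cmat \<Rightarrow> ('x \<times> 'y) cmat" where
  "kron S T = (\<lambda>(i, j) (i', j'). S i i' * T j j')"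

definition separable :: "(('x::finite) \<times> ('y::finite)) cmat \<Rightarrow> bool" where
  "separable \<rho> \<longleftrightarrow> (\<exists>(n::nat) (p::nat \<Rightarrow> real) (S::nat \<Rightarrow> 'x cmat) (T::nat \<Rightarrow> 'y cmat).
      (\<forall>k<n. 0 \<le> p k \<and> density_op (S k) \<and> density_op (T k)) \<and> (\<Sum>k<n. p k) = 1 \<and>
      \<rho> = (\<lambda>u w. \<Sum>k<n. complex_of_real (p k) * kron (S k) (T k) u w))"

definition entangled :: "(('x::finite) \<times> ('y::finite)) cmat \<Rightarrow> bool" where
  "entangled \<rho> \<longleftrightarrow> \<not> separable \<rho>"

definition partial_transpose_Y :: "('x \<times> 'y) cmat \<Rightarrow> ('x \<times> 'y) cmat" where
  "partial_transpose_Y \<rho> = (\<lambda>(i, j) (i', j'). \<rho> (i, j') (i', j))"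

definition NPT :: "(('x::finite) \<times> ('y::finite)) cmat \<Rightarrow> bool" where
  "NPT \<rho> \<longleftrightarrow> \<not> psd (partial_transpose_Y \<rho>)"

definition range_c :: "('i::finite) cmat \<Rightarrow> 'i cvec set" where
  "range_c M = range (mat_apply M)"

definition ker_c :: "('i::finite) cmat \<Rightarrow> 'i cvec set" where
  "ker_c M = {v. mat_apply M v = (\<lambda>_. 0)}"

definition is_orth_proj_onto :: "('i::finite) cmat \<Rightarrow> 'i cvec set \<Rightarrow> bool" where
  "is_orth_proj_onto P V \<longleftrightarrow> adjoint P = P \<and> mmult P P = P \<and> range_c P = V"

definition orth_proj :: "('i::finite) cvec set \<Rightarrow> 'i cmat" where
  "orth_proj V = (THE P. is_orth_proj_onto P V)"

definition is_orth_proj :: "('i::finite) cmat \<Rightarrow> bool" where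
  "is_orth_proj P \<longleftrightarrow> adjoint P = P \<and> mmult P P = P"

definition proj_meas :: "('x::finite) cmat list \<Rightarrow> bool" where
  "proj_meas M \<longleftrightarrow> (\<forall>a<length M. is_orth_proj (M ! a)) \<and>
                   (\<lambda>i j. \<Sum>a<length M. (M ! a) i j) = id_mat"

text \<open>sigma = tr_X[(Proj \<otimes> I) rho].\<close>
definition assemblage :: "(('x::finite) \<times> ('y::finite)) cmat \<Rightarrow> 'x cmat \<Rightarrow> 'y cmat" where
  "assemblage \<rho> Proj = (\<lambda>j j'. \<Sum>i\<in>UNIV. \<Sum>k\<in>UNIV. Proj i k * \<rho> (k, j) (i, j'))"

definition lhs_model :: "'l measure \<Rightarrow> ('l \<Rightarrow> ('y::finite) cmat) \<Rightarrow>
     (('x::finite) cmat list \<Rightarrow> nat \<Rightarrow> 'l \<Rightarrow> real) \<Rightarrow> ('x \<times> 'y) cmat \<Rightarrow> bool" where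
  "lhs_model \<mu> \<tau> p \<rho> \<longleftrightarrow>
     prob_space \<mu> \<and>
     (\<forall>l\<in>space \<mu>. density_op (\<tau> l)) \<and>
     (\<forall>j j'. (\<lambda>l. \<tau> l j j') \<in> borel_measurable \<mu>) \<and>
     (\<forall>M. proj_meas M \<longrightarrow>
        (\<forall>a<length M. (\<lambda>l. p M a l) \<in> borel_measurable \<mu>) \<and>
        (\<forall>l\<in>space \<mu>. (\<forall>a<length M. 0 \<le> p M a l) \<and> (\<Sum>a<length M. p M a l) = 1) \<and>
        (\<forall>a<length M. \<forall>j j'. assemblage \<rho> (M ! a) j j' =
            integral\<^sup>L \<mu> (\<lambda>l. complex_of_real (p M a l) * \<tau> l j j')))"

text \<open>The hidden-variable space is taken, without loss of generality, to be the
canonical one: a hidden variable is a pair (hidden state, response function);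
any LHS model on an arbitrary probability space can be pushed forward to it.\<close>
type_synonym ('x, 'y) hidden = "'y cmat \<times> ('x cmat list \<Rightarrow> nat \<Rightarrow> real)"

definition proj_steerable :: "(('x::finite) \<times> ('y::finite)) cmat \<Rightarrow> bool" where
  "proj_steerable \<rho> \<longleftrightarrow>
     \<not> (\<exists>(\<mu>::('x, 'y) hidden measure) \<tau> p. lhs_model \<mu> \<tau> p \<rho>)"

definition span2_tensor :: "('x::finite) cvec \<Rightarrow> 'x cvec \<Rightarrow> ('x \<times> ('y::finite)) cvec set" where
  "span2_tensor a0 a1 = {w. \<exists>u0 u1 :: 'y cvec. w = (\<lambda>(i, j). a0 i * u0 j + a1 i * u1 j)}"

definition partial_braket :: "('x::finite) cvec \<Rightarrow> ('x \<times> ('y::finite)) cmat \<Rightarrow> 'x cvec \<Rightarrow> 'y cmat" where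
  "partial_braket u \<rho> v = (\<lambda>j j'. \<Sum>i\<in>UNIV. \<Sum>i'\<in>UNIV. cnj (u i) * \<rho> (i, j) (i', j') * v i')"

end

theory Submission
  imports Defs
begin


lemma sum_UNIV_pair: "(\<Sum>u\<in>(UNIV::('a::finite \<times> 'b::finite) set). f u) = (\<Sum>i\<in>UNIV. \<Sum>j\<in>UNIV. f (i,j))"
  by (simp add: sum.cartesian_product)

definition qf :: "('i::finite) cmat \<Rightarrow> 'i cvec \<Rightarrow> 'i cvec \<Rightarrow> complex" where
  "qf M x y = (\<Sum>i\<in>UNIV. \<Sum>j\<in>UNIV. cnj (x i) * M i j * y j)"

lemma inner_mat_apply: "inner_c x (mat_apply M y) = qf M x y"
  by (simp add: inner_c_def mat_apply_def qf_def sum_distrib_left mult.assoc)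

lemma psdD: "psd M \<Longrightarrow> Im (qf M v v) = 0 \<and> 0 \<le> Re (qf M v v)"
  by (simp add: psd_def inner_mat_apply)

lemma psdI: "(\<And>v. Im (qf M v v) = 0 \<and> 0 \<le> Re (qf M v v)) \<Longrightarrow> psd M"
  by (simp add: psd_def inner_mat_apply)

lemma qf_add_left: "qf M (\<lambda>i. x i + c * y i) z = qf M x z + cnj c * qf M y z"
proof -
  have "qf M (\<lambda>i. x i + c * y i) z = (\<Sum>i\<in>UNIV. \<Sum>j\<in>UNIV. cnj (x i) * M i j * z j + cnj c * (cnj (y i) * M i j * z j))"
    unfolding qf_def by (intro sum.cong refl) (simp add: distrib_right mult.assoc)
  thus ?thesis unfolding qf_def by (simp add: sum.distrib sum_distrib_left)
qed

lemma qf_add_right: "qf M x (\<lambda>i. y i + c * z i) = qf M x y + c * qf M x z"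
proof -
  have "qf M x (\<lambda>i. y i + c * z i) = (\<Sum>i\<in>UNIV. \<Sum>j\<in>UNIV. cnj (x i) * M i j * y j + c * (cnj (x i) * M i j * z j))"
    unfolding qf_def by (intro sum.cong refl) (simp add: distrib_left mult.assoc mult.left_commute)
  thus ?thesis unfolding qf_def by (simp add: sum.distrib sum_distrib_left)
qed

lemma qf_expand: "qf M (\<lambda>i. x i + c * y i) (\<lambda>i. x i + c * y i) =
   qf M x x + c * qf M x y + cnj c * qf M y x + cnj c * c * qf M y y"
  by (simp add: qf_add_left qf_add_right ring_distribs mult.assoc)


lemma psd_herm:
  assumes "psd M" shows "qf M y x = cnj (qf M x y)"
proof -
  have h1: "Im (qf M x y + qf M y x) = 0"
    using psdD[OF assms, of "\<lambda>i. x i + 1 * y i"] psdD[OF assms, of x] psdD[OF assms, of y]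
    unfolding qf_expand by simp
  have h2: "Re (qf M x y - qf M y x) = 0"
    using psdD[OF assms, of "\<lambda>i. x i + \<i> * y i"] psdD[OF assms, of x] psdD[OF assms, of y]
    unfolding qf_expand by simp
  show ?thesis using h1 h2 by (simp add: complex_eq_iff)
qed

lemma quad_disc:
  fixes A B Z :: real
  assumes "\<And>t. 0 \<le> A - 2 * t * Z + t^2 * Z * B" "0 \<le> Z" "0 \<le> B"
  shows "Z \<le> A * B"
proof (cases "B > 0")
  case True
  have "0 \<le> A - 2 * (1/B) * Z + (1/B)^2 * Z * B" by (rule assms(1))
  also have "\<dots> = A - Z / B" using True by (simp add: field_simps power2_eq_square)
  finally show ?thesis using True by (simp add: field_simps)
next
  case False
  hence B0: "B = 0" using assms by simp
  show ?thesis
  proof (rule ccontr)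
    assume "\<not> Z \<le> A * B"
    hence Zp: "Z > 0" using B0 by simp
    have "0 \<le> A - 2 * ((\<bar>A\<bar>+1)/(2*Z)) * Z + ((\<bar>A\<bar>+1)/(2*Z))^2 * Z * B" by (rule assms(1))
    also have "\<dots> = A - (\<bar>A\<bar>+1)" using Zp B0 by (simp add: field_simps)
    finally show False by simp
  qed
qed

lemma psd_CS:
  assumes "psd M" shows "(cmod (qf M x y))^2 \<le> Re (qf M x x) * Re (qf M y y)"
proof -
  define z where "z = qf M x y"
  have zz: "cnj z * z = of_real ((cmod z)^2)" by (metis complex_norm_square mult.commute)
  have "\<And>t::real. 0 \<le> Re (qf M x x) - 2 * t * (cmod z)^2 + t^2 * (cmod z)^2 * Re (qf M y y)"
  proof -
    fix t :: real
    define c where "c = - (of_real t * cnj z)"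
    have "0 \<le> Re (qf M (\<lambda>i. x i + c * y i) (\<lambda>i. x i + c * y i))"
      using psdD[OF assms] by blast
    also have "qf M (\<lambda>i. x i + c * y i) (\<lambda>i. x i + c * y i) = qf M x x + c * z + cnj c * cnj z + cnj c * c * qf M y y"
      unfolding qf_expand psd_herm[OF assms, of y x] z_def ..
    also have "c * z = - of_real t * (cnj z * z)" unfolding c_def by (simp add: algebra_simps)
    also have "cnj c * cnj z = - of_real t * (cnj z * z)" unfolding c_def by (simp add: algebra_simps)
    also have "cnj c * c = of_real (t^2) * (cnj z * z)" unfolding c_def by (simp add: algebra_simps power2_eq_square)
    finally show "0 \<le> Re (qf M x x) - 2 * t * (cmod z)^2 + t^2 * (cmod z)^2 * Re (qf M y y)"
      unfolding zz using psdD[OF assms, of y] by (simp add: algebra_simps)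
  qed
  thus ?thesis using quad_disc[of "Re (qf M x x)" "(cmod z)^2" "Re (qf M y y)"] psdD[OF assms, of y] unfolding z_def by simp
qed



lemma sum4_reorder:
  "(\<Sum>j\<in>A. \<Sum>j'\<in>B. \<Sum>i\<in>C. \<Sum>i'\<in>D. F i j i' j') = (\<Sum>i\<in>C. \<Sum>j\<in>A. \<Sum>i'\<in>D. \<Sum>j'\<in>B. F i j i' j')"
proof -
  have "(\<Sum>j\<in>A. \<Sum>j'\<in>B. \<Sum>i\<in>C. \<Sum>i'\<in>D. F i j i' j') = (\<Sum>j\<in>A. \<Sum>i\<in>C. \<Sum>j'\<in>B. \<Sum>i'\<in>D. F i j i' j')"
    by (rule sum.cong[OF refl], rule sum.swap)
  also have "\<dots> = (\<Sum>i\<in>C. \<Sum>j\<in>A. \<Sum>j'\<in>B. \<Sum>i'\<in>D. F i j i' j')" by (rule sum.swap)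
  also have "\<dots> = (\<Sum>i\<in>C. \<Sum>j\<in>A. \<Sum>i'\<in>D. \<Sum>j'\<in>B. F i j i' j')"
    by (rule sum.cong[OF refl], rule sum.cong[OF refl], rule sum.swap)
  finally show ?thesis .
qed

lemma qf_plus: "qf (\<lambda>u w. M u w + N u w) x y = qf M x y + qf N x y"
  by (simp add: qf_def ring_distribs sum.distrib)

lemma qf_term:
  fixes x y :: "('x::finite \<times> 'y::finite) cvec"
  shows "qf (\<lambda>(i,j) (i',j'). \<beta> i * cnj (\<gamma> i') * R j j') x y =
     qf R (\<lambda>j. \<Sum>i\<in>UNIV. cnj (\<beta> i) * x (i,j)) (\<lambda>j. \<Sum>i\<in>UNIV. cnj (\<gamma> i) * y (i,j))"
proof -
  have "qf R (\<lambda>j. \<Sum>i\<in>UNIV. cnj (\<beta> i) * x (i,j)) (\<lambda>j. \<Sum>i\<in>UNIV. cnj (\<gamma> i) * y (i,j))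
     = (\<Sum>j\<in>UNIV. \<Sum>j'\<in>UNIV. \<Sum>i\<in>UNIV. \<Sum>i'\<in>UNIV. cnj (x (i,j)) * (\<beta> i * cnj (\<gamma> i') * R j j') * y (i',j'))"
    unfolding qf_def
  proof (intro sum.cong refl)
    fix j j'
    have "cnj (\<Sum>i\<in>UNIV. cnj (\<beta> i) * x (i,j)) * R j j' * (\<Sum>i\<in>UNIV. cnj (\<gamma> i) * y (i,j'))
      = (\<Sum>i\<in>UNIV. \<beta> i * cnj (x (i,j))) * R j j' * (\<Sum>i\<in>UNIV. cnj (\<gamma> i) * y (i,j'))"
      by (simp add: cnj_sum)
    also have "\<dots> = (\<Sum>i\<in>UNIV. \<Sum>i'\<in>UNIV. (\<beta> i * cnj (x (i,j))) * R j j' * (cnj (\<gamma> i') * y (i',j')))"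
      by (simp add: sum_distrib_left sum_distrib_right, rule sum.swap)
    also have "\<dots> = (\<Sum>i\<in>UNIV. \<Sum>i'\<in>UNIV. cnj (x (i,j)) * (\<beta> i * cnj (\<gamma> i') * R j j') * y (i',j'))"
      by (intro sum.cong refl) (simp add: mult_ac)
    finally show "cnj (\<Sum>i\<in>UNIV. cnj (\<beta> i) * x (i,j)) * R j j' * (\<Sum>i\<in>UNIV. cnj (\<gamma> i) * y (i,j'))
      = (\<Sum>i\<in>UNIV. \<Sum>i'\<in>UNIV. cnj (x (i,j)) * (\<beta> i * cnj (\<gamma> i') * R j j') * y (i',j'))" .
  qed
  also have "\<dots> = qf (\<lambda>(i,j) (i',j'). \<beta> i * cnj (\<gamma> i') * R j j') x y"
    apply (subst sum4_reorder)
    unfolding qf_def sum_UNIV_pair by (simp add: sum_distrib_left sum_distrib_right)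
  finally show ?thesis by simp
qed



definition evec :: "'i \<Rightarrow> 'i \<Rightarrow> complex" where "evec c = (\<lambda>i. if i = c then 1 else 0)"

lemma mat_apply_ev: "mat_apply M (evec c) = (\<lambda>u. M u c)"
proof -
  have "mat_apply M (evec c) = (\<lambda>u. \<Sum>j\<in>UNIV. if j = c then M u j else 0)"
    unfolding mat_apply_def evec_def by (intro ext sum.cong refl) auto
  thus ?thesis by simp
qed

lemma inner_ev: "inner_c (evec c) v = v c"
proof -
  have "inner_c (evec c) v = (\<Sum>j\<in>UNIV. if j = c then v j else 0)"
    unfolding inner_c_def evec_def by (intro sum.cong refl) auto
  thus ?thesis by simp
qed

lemma qf_ev: "qf M (evec c) (evec d) = M c d"
  by (simp add: inner_mat_apply[symmetric] mat_apply_ev inner_ev)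

lemma psd_herm_entry: "psd M \<Longrightarrow> M d c = cnj (M c d)"
  using psd_herm[of M "evec c" "evec d"] by (simp add: qf_ev)

lemma inner_swap: "inner_c v u = cnj (inner_c u v)"
  by (simp add: inner_c_def cnj_sum mult.commute)

lemma pb_herm:
  assumes "\<And>c d. M d c = cnj (M c d)"
  shows "partial_braket u M v j j' = cnj (partial_braket v M u j' j)"
  unfolding partial_braket_def cnj_sum complex_cnj_mult complex_cnj_cnj
  apply (subst sum.swap)
  apply (intro sum.cong refl)
  apply (subst assms)
  by (simp add: mult_ac)



locale ST =
  fixes \<rho> :: "(('x::finite) \<times> ('y::finite)) cmat"
    and \<alpha>0 \<alpha>1 :: "'x cvec" and \<phi> :: "'y cvec" and a :: real
  assumes on00: "inner_c \<alpha>0 \<alpha>0 = 1" and on11: "inner_c \<alpha>1 \<alpha>1 = 1" and on01: "inner_c \<alpha>0 \<alpha>1 = 0"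
    and state: "density_op \<rho>"
    and support: "range_c \<rho> \<subseteq> span2_tensor \<alpha>0 \<alpha>1"
    and unit_phi: "inner_c \<phi> \<phi> = 1"
    and a_pos: "a > 0"
    and A_rank1: "partial_braket \<alpha>0 \<rho> \<alpha>0 = (\<lambda>j j'. complex_of_real a * \<phi> j * cnj (\<phi> j'))"

context ST begin

lemma on10: "inner_c \<alpha>1 \<alpha>0 = 0"
  using on01 inner_swap[of \<alpha>1 \<alpha>0] by simp

lemma rho_psd: "psd \<rho>" using state by (simp add: density_op_def)

lemma herm: "\<rho> d c = cnj (\<rho> c d)"
  using psd_herm_entry[OF rho_psd] .

lemma colspan: "\<rho> (i,j) c = \<alpha>0 i * (\<Sum>k\<in>UNIV. cnj (\<alpha>0 k) * \<rho> (k,j) c) + \<alpha>1 i * (\<Sum>k\<in>UNIV. cnj (\<alpha>1 k) * \<rho> (k,j) c)"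
proof -
  have "mat_apply \<rho> (evec c) \<in> span2_tensor \<alpha>0 \<alpha>1" using support unfolding range_c_def by blast
  then obtain u0 u1 :: "'y cvec" where uu: "(\<lambda>u. \<rho> u c) = (\<lambda>(i, j). \<alpha>0 i * u0 j + \<alpha>1 i * u1 j)"
    unfolding mat_apply_ev span2_tensor_def by blast
  have r: "\<And>k j. \<rho> (k,j) c = \<alpha>0 k * u0 j + \<alpha>1 k * u1 j"
    using fun_cong[OF uu] by simp
  have s: "\<And>\<beta> j. (\<Sum>k\<in>UNIV. cnj (\<beta> k) * \<rho> (k,j) c) = inner_c \<beta> \<alpha>0 * u0 j + inner_c \<beta> \<alpha>1 * u1 j"
    unfolding r inner_c_def by (simp add: distrib_left sum.distrib sum_distrib_left mult_ac)
  have "\<rho> (i,j) c = \<alpha>0 i * u0 j + \<alpha>1 i * u1 j" by (rule r)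
  also have "\<dots> = \<alpha>0 i * (\<Sum>k\<in>UNIV. cnj (\<alpha>0 k) * \<rho> (k,j) c) + \<alpha>1 i * (\<Sum>k\<in>UNIV. cnj (\<alpha>1 k) * \<rho> (k,j) c)"
    unfolding s on00 on11 on01 on10 by simp
  finally show ?thesis .
qed

lemma F1: "\<rho> (i,j) (i',j') =
   \<alpha>0 i * cnj (\<alpha>0 i') * partial_braket \<alpha>0 \<rho> \<alpha>0 j j' + \<alpha>0 i * cnj (\<alpha>1 i') * partial_braket \<alpha>0 \<rho> \<alpha>1 j j' +
   \<alpha>1 i * cnj (\<alpha>0 i') * partial_braket \<alpha>1 \<rho> \<alpha>0 j j' + \<alpha>1 i * cnj (\<alpha>1 i') * partial_braket \<alpha>1 \<rho> \<alpha>1 j j'"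
proof -
  have H: "\<And>k. \<rho> (k,j) (i',j') = cnj (\<alpha>0 i') * (\<Sum>k'\<in>UNIV. \<rho> (k,j) (k',j') * \<alpha>0 k') + cnj (\<alpha>1 i') * (\<Sum>k'\<in>UNIV. \<rho> (k,j) (k',j') * \<alpha>1 k')"
  proof -
    fix k
    have "\<rho> (k,j) (i',j') = cnj (\<rho> (i',j') (k,j))" by (rule herm)
    also have "\<dots> = cnj (\<alpha>0 i' * (\<Sum>k'\<in>UNIV. cnj (\<alpha>0 k') * \<rho> (k',j') (k,j)) + \<alpha>1 i' * (\<Sum>k'\<in>UNIV. cnj (\<alpha>1 k') * \<rho> (k',j') (k,j)))"
      by (subst colspan) (rule refl)
    also have "\<dots> = cnj (\<alpha>0 i') * (\<Sum>k'\<in>UNIV. \<alpha>0 k' * cnj (\<rho> (k',j') (k,j))) + cnj (\<alpha>1 i') * (\<Sum>k'\<in>UNIV. \<alpha>1 k' * cnj (\<rho> (k',j') (k,j)))"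
      by (simp add: cnj_sum)
    also have "\<dots> = cnj (\<alpha>0 i') * (\<Sum>k'\<in>UNIV. \<rho> (k,j) (k',j') * \<alpha>0 k') + cnj (\<alpha>1 i') * (\<Sum>k'\<in>UNIV. \<rho> (k,j) (k',j') * \<alpha>1 k')"
      by (simp add: herm[of "(k,j)"] mult.commute)
    finally show "\<rho> (k,j) (i',j') = cnj (\<alpha>0 i') * (\<Sum>k'\<in>UNIV. \<rho> (k,j) (k',j') * \<alpha>0 k') + cnj (\<alpha>1 i') * (\<Sum>k'\<in>UNIV. \<rho> (k,j) (k',j') * \<alpha>1 k')" .
  qed
  have G: "\<And>\<beta>. (\<Sum>k\<in>UNIV. cnj (\<beta> k) * \<rho> (k,j) (i',j')) = cnj (\<alpha>0 i') * partial_braket \<beta> \<rho> \<alpha>0 j j' + cnj (\<alpha>1 i') * partial_braket \<beta> \<rho> \<alpha>1 j j'"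
    unfolding H partial_braket_def
    by (simp add: distrib_left sum.distrib sum_distrib_left mult_ac)
  show ?thesis
    by (subst colspan) (simp only: G algebra_simps)
qed

end


lemma mmult_assoc: "mmult (mmult M N) K = mmult M (mmult N K)"
  unfolding mmult_def
  by (rule ext, rule ext) (simp add: sum_distrib_left sum_distrib_right mult.assoc, rule sum.swap)

lemma adjoint_mmult: "adjoint (mmult M N) = mmult (adjoint N) (adjoint M)"
  unfolding mmult_def adjoint_def by (simp add: cnj_sum mult.commute)

lemma adjoint_adjoint: "adjoint (adjoint M) = M"
  unfolding adjoint_def by simp

lemma mat_apply_mmult: "mat_apply (mmult M N) v = mat_apply M (mat_apply N v)"
  unfolding mmult_def mat_apply_def
  by (rule ext) (simp add: sum_distrib_left sum_distrib_right mult.assoc, rule sum.swap)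

lemma mmult_col: "(\<lambda>u. mmult M N u c) = mat_apply M (\<lambda>u. N u c)"
  unfolding mmult_def mat_apply_def by simp

lemma proj_fix:
  assumes "mmult Q Q = Q" "range_c P \<subseteq> range_c Q"
  shows "mmult Q P = P"
proof (rule ext, rule ext)
  fix i c
  have "mat_apply P (evec c) \<in> range_c Q" using assms(2) unfolding range_c_def by blast
  then obtain y where y: "(\<lambda>u. P u c) = mat_apply Q y" unfolding range_c_def mat_apply_ev by blast
  have "(\<lambda>u. mmult Q P u c) = mat_apply Q (\<lambda>u. P u c)" by (rule mmult_col)
  also have "\<dots> = mat_apply (mmult Q Q) y" unfolding y mat_apply_mmult ..
  also have "\<dots> = (\<lambda>u. P u c)" unfolding assms(1) y ..
  finally show "mmult Q P i c = P i c" by (rule fun_cong)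
qed

lemma orth_proj_unique:
  assumes "is_orth_proj_onto P V" "is_orth_proj_onto Q V"
  shows "P = Q"
proof -
  have P: "adjoint P = P" "mmult P P = P" "range_c P = V" and Q: "adjoint Q = Q" "mmult Q Q = Q" "range_c Q = V"
    using assms unfolding is_orth_proj_onto_def by auto
  have QP: "mmult Q P = P" using proj_fix[of Q P] P Q by simp
  have "P = adjoint P" using P by simp
  also have "\<dots> = adjoint (mmult Q P)" using QP by simp
  also have "\<dots> = mmult P Q" unfolding adjoint_mmult P Q ..
  also have "\<dots> = Q" using proj_fix[of P Q] P Q by simp
  finally show ?thesis .
qed

lemma orth_proj_eq: "is_orth_proj_onto P V \<Longrightarrow> orth_proj V = P"
  unfolding orth_proj_def by (rule the1_equality) (auto intro: orth_proj_unique)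

lemma qf_scale_left: "qf M (\<lambda>i. c * x i) y = cnj c * qf M x y"
  unfolding qf_def by (simp add: sum_distrib_left mult_ac)

lemma qf_scale_right: "qf M x (\<lambda>i. c * y i) = c * qf M x y"
  unfolding qf_def by (simp add: sum_distrib_left mult_ac)

lemma inner_add_right: "inner_c u (\<lambda>i. x i + c * y i) = inner_c u x + c * inner_c u y"
  unfolding inner_c_def by (simp add: distrib_left sum.distrib sum_distrib_left mult_ac)



definition tm :: "('x::finite) cvec \<Rightarrow> 'x cvec \<Rightarrow> ('y::finite) cmat \<Rightarrow> ('x \<times> 'y) cmat" where
  "tm \<beta> \<gamma> R = (\<lambda>(i,j) (i',j'). \<beta> i * cnj (\<gamma> i') * R j j')"

definition pc :: "('x::finite) cvec \<Rightarrow> ('x \<times> ('y::finite)) cvec \<Rightarrow> 'y cvec" where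
  "pc \<beta> x = (\<lambda>j. \<Sum>i\<in>UNIV. cnj (\<beta> i) * x (i,j))"

definition trY :: "'y cmat \<Rightarrow> 'y cmat" where "trY R = (\<lambda>j j'. R j' j)"

lemma qf_tm: "qf (tm \<beta> \<gamma> R) x y = qf R (pc \<beta> x) (pc \<gamma> y)"
  unfolding tm_def pc_def by (rule qf_term)

lemma qf_adj: "(\<And>j j'. D j j' = cnj (B j' j)) \<Longrightarrow> qf D v u = cnj (qf B u v)"
  unfolding qf_def cnj_sum by (subst sum.swap) (simp add: mult_ac)

context ST begin

definition "A = partial_braket \<alpha>0 \<rho> \<alpha>0"
definition "B = partial_braket \<alpha>0 \<rho> \<alpha>1"
definition "D = partial_braket \<alpha>1 \<rho> \<alpha>0"
definition "C = partial_braket \<alpha>1 \<rho> \<alpha>1"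
definition "mk u v = (\<lambda>(i,j). \<alpha>0 i * u j + \<alpha>1 i * v j)"

lemma D_eq: "D j j' = cnj (B j' j)"
  unfolding D_def B_def by (rule pb_herm) (rule herm)

lemma rho_decomp: "\<rho> = (\<lambda>u w. tm \<alpha>0 \<alpha>0 A u w + tm \<alpha>0 \<alpha>1 B u w + tm \<alpha>1 \<alpha>0 D u w + tm \<alpha>1 \<alpha>1 C u w)"
  unfolding tm_def A_def B_def C_def D_def
  by (intro ext) (auto simp: F1)

lemma PT_decomp: "partial_transpose_Y \<rho> =
   (\<lambda>u w. tm \<alpha>0 \<alpha>0 (trY A) u w + tm \<alpha>0 \<alpha>1 (trY B) u w + tm \<alpha>1 \<alpha>0 (trY D) u w + tm \<alpha>1 \<alpha>1 (trY C) u w)"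
  unfolding tm_def A_def B_def C_def D_def partial_transpose_Y_def trY_def
  by (intro ext) (auto simp: F1)

lemma qf_rho: "qf \<rho> x y = qf A (pc \<alpha>0 x) (pc \<alpha>0 y) + qf B (pc \<alpha>0 x) (pc \<alpha>1 y) + qf D (pc \<alpha>1 x) (pc \<alpha>0 y) + qf C (pc \<alpha>1 x) (pc \<alpha>1 y)"
  by (subst rho_decomp) (simp only: qf_plus qf_tm)

lemma qf_PT: "qf (partial_transpose_Y \<rho>) x y = qf (trY A) (pc \<alpha>0 x) (pc \<alpha>0 y) + qf (trY B) (pc \<alpha>0 x) (pc \<alpha>1 y)
   + qf (trY D) (pc \<alpha>1 x) (pc \<alpha>0 y) + qf (trY C) (pc \<alpha>1 x) (pc \<alpha>1 y)"
  by (subst PT_decomp) (simp only: qf_plus qf_tm)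

lemma pc_mk0: "pc \<alpha>0 (mk u v) = u"
proof
  fix j
  have "pc \<alpha>0 (mk u v) j = inner_c \<alpha>0 \<alpha>0 * u j + inner_c \<alpha>0 \<alpha>1 * v j"
    unfolding pc_def mk_def inner_c_def by (simp add: distrib_left sum.distrib sum_distrib_left mult_ac)
  thus "pc \<alpha>0 (mk u v) j = u j" by (simp add: on00 on01)
qed

lemma pc_mk1: "pc \<alpha>1 (mk u v) = v"
proof
  fix j
  have "pc \<alpha>1 (mk u v) j = inner_c \<alpha>1 \<alpha>0 * u j + inner_c \<alpha>1 \<alpha>1 * v j"
    unfolding pc_def mk_def inner_c_def by (simp add: distrib_left sum.distrib sum_distrib_left mult_ac)
  thus "pc \<alpha>1 (mk u v) j = v j" by (simp add: on10 on11)
qed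

lemma qf_rho_mk: "qf \<rho> (mk u v) (mk u v) = qf A u u + qf B u v + cnj (qf B u v) + qf C v v"
  unfolding qf_rho pc_mk0 pc_mk1 qf_adj[of D B, OF D_eq] ..

lemma qfA: "qf A u v = of_real a * cnj (inner_c \<phi> u) * inner_c \<phi> v"
  unfolding A_def A_rank1 qf_def inner_c_def
  by (simp add: sum_distrib_left sum_distrib_right cnj_sum mult_ac)

lemma psd_C: "Im (qf C v v) = 0 \<and> 0 \<le> Re (qf C v v)"
proof -
  have "qf C v v = qf \<rho> (mk (\<lambda>_. 0) v) (mk (\<lambda>_. 0) v)"
    unfolding qf_rho_mk by (simp add: qf_def)
  thus ?thesis using psdD[OF rho_psd] by simp
qed

lemma B_kill:
  assumes "inner_c \<phi> u = 0" shows "qf B u v = 0"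
proof (rule ccontr)
  define z where "z = qf B u v"
  assume "qf B u v \<noteq> 0"
  hence zp: "(cmod z)^2 > 0" unfolding z_def by simp
  define s :: real where "s = (\<bar>Re (qf C v v)\<bar> + 1) / (2 * (cmod z)^2)"
  define t where "t = - (of_real s * z)"
  have zz: "cnj z * z = of_real ((cmod z)^2)" by (metis complex_norm_square mult.commute)
  have "0 \<le> Re (qf \<rho> (mk (\<lambda>i. t * u i) v) (mk (\<lambda>i. t * u i) v))" using psdD[OF rho_psd] by blast
  also have "qf \<rho> (mk (\<lambda>i. t * u i) v) (mk (\<lambda>i. t * u i) v) = - of_real s * (cnj z * z) - of_real s * (cnj z * z) + qf C v v"
    unfolding qf_rho_mk qfA qf_scale_left qf_scale_right
    using assms by (simp add: inner_c_def t_def z_def[symmetric] algebra_simps sum_distrib_left[symmetric])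
  also have "Re \<dots> = - 2 * s * (cmod z)^2 + Re (qf C v v)" unfolding zz by simp
  also have "\<dots> = - (\<bar>Re (qf C v v)\<bar> + 1) + Re (qf C v v)" unfolding s_def using zp by simp
  finally show False by simp
qed

end


context ST begin

definition "bet j' = qf B \<phi> (evec j')"
definition "bv v = (\<Sum>j\<in>UNIV. bet j * v j)"
definition "bc v = (\<Sum>j\<in>UNIV. cnj (bet j) * v j)"
definition "pv v = (\<Sum>j\<in>UNIV. \<phi> j * v j)"
definition "gam = bv \<phi>"
definition "wc j = bet j - gam * cnj (\<phi> j)"

lemma ip_ev: "inner_c \<phi> (evec j) = cnj (\<phi> j)"
  by (simp add: inner_swap[of \<phi>] inner_ev)

lemma B_struct: "B j j' = \<phi> j * bet j'"
proof -
  define u where "u = (\<lambda>i. evec j i + (- cnj (\<phi> j)) * \<phi> i)"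
  have "inner_c \<phi> u = 0" unfolding u_def inner_add_right ip_ev unit_phi by simp
  hence "qf B u (evec j') = 0" by (rule B_kill)
  also have "qf B u (evec j') = B j j' - \<phi> j * bet j'"
    unfolding u_def qf_add_left qf_ev bet_def by simp
  finally show ?thesis by simp
qed

lemma qfB: "qf B u v = cnj (inner_c \<phi> u) * bv v"
  unfolding qf_def B_struct inner_c_def bv_def
  by (simp add: sum_distrib_left sum_distrib_right cnj_sum mult_ac, rule sum.swap)

lemma qfAT: "qf (trY A) u v = of_real a * cnj (pv u) * pv v"
  unfolding qf_def trY_def A_def A_rank1 pv_def
  by (simp add: sum_distrib_left sum_distrib_right cnj_sum mult_ac)

lemma qfBT: "qf (trY B) u v = cnj (bc u) * pv v"
  unfolding qf_def trY_def B_struct pv_def bc_def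
  by (simp add: sum_distrib_left sum_distrib_right cnj_sum mult_ac)

lemma qfDT: "qf (trY D) u v = cnj (pv u) * bc v"
  unfolding qf_def trY_def D_eq B_struct pv_def bc_def
  by (simp add: sum_distrib_left sum_distrib_right mult_ac, rule sum.swap)

lemma qfCT: "qf (trY C) u v = qf C (\<lambda>j. cnj (v j)) (\<lambda>j. cnj (u j))"
  unfolding qf_def trY_def
  by (subst sum.swap) (simp add: mult_ac)

lemma qf_PT_expand: "qf (partial_transpose_Y \<rho>) x x =
   of_real a * cnj (pv (pc \<alpha>0 x)) * pv (pc \<alpha>0 x) + cnj (bc (pc \<alpha>0 x)) * pv (pc \<alpha>1 x)
   + cnj (pv (pc \<alpha>1 x)) * bc (pc \<alpha>0 x) + qf C (\<lambda>j. cnj (pc \<alpha>1 x j)) (\<lambda>j. cnj (pc \<alpha>1 x j))"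
  unfolding qf_PT qfAT qfBT qfDT qfCT ..

end


context ST begin

lemma pv_scale: "pv (\<lambda>j. c * w j) = c * pv w" unfolding pv_def by (simp add: sum_distrib_left mult_ac)
lemma bc_scale: "bc (\<lambda>j. c * w j) = c * bc w" unfolding bc_def by (simp add: sum_distrib_left mult_ac)

lemma phi_norm: "(\<Sum>j\<in>UNIV. \<phi> j * cnj (\<phi> j)) = 1"
  using unit_phi unfolding inner_c_def by (simp add: mult.commute)

lemma pv_cphi: "pv (\<lambda>j. cnj (\<phi> j)) = 1" unfolding pv_def by (rule phi_norm)

lemma gam_eq: "gam = (\<Sum>j\<in>UNIV. \<phi> j * bet j)"
  unfolding gam_def bv_def by (simp add: mult.commute)

lemma pv_wc: "pv wc = 0"
proof -
  have "pv wc = (\<Sum>j\<in>UNIV. \<phi> j * bet j) - gam * (\<Sum>j\<in>UNIV. \<phi> j * cnj (\<phi> j))"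
    unfolding pv_def wc_def by (simp add: right_diff_distrib sum_subtractf sum_distrib_left mult_ac)
  thus ?thesis unfolding phi_norm gam_eq[symmetric] by simp
qed

definition "Nw = (\<Sum>j\<in>UNIV. (cmod (wc j))^2)"

lemma bc_wc: "bc wc = of_real Nw"
proof -
  have "bc wc = (\<Sum>j\<in>UNIV. cnj (wc j) * wc j) + cnj gam * pv wc"
    unfolding bc_def pv_def
    by (simp add: wc_def algebra_simps sum.distrib sum_subtractf sum_distrib_left)
  also have "(\<Sum>j\<in>UNIV. cnj (wc j) * wc j) = of_real Nw"
    unfolding Nw_def of_real_sum by (intro sum.cong refl) (metis complex_norm_square mult.commute)
  finally show ?thesis unfolding pv_wc by simp
qed

lemma Nw_pos: "wc \<noteq> (\<lambda>_. 0) \<Longrightarrow> Nw > 0"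
proof -
  assume "wc \<noteq> (\<lambda>_. 0)"
  then obtain j where "wc j \<noteq> 0" by auto
  hence "(cmod (wc j))^2 > 0" by simp
  moreover have "(cmod (wc j))^2 \<le> Nw" unfolding Nw_def
    by (rule member_le_sum) auto
  ultimately show ?thesis by linarith
qed

lemma npt_if: assumes "wc \<noteq> (\<lambda>_. 0)" shows "NPT \<rho>"
proof -
  have Np: "Nw > 0" using Nw_pos[OF assms] .
  define s :: real where "s = (\<bar>Re (qf C \<phi> \<phi>)\<bar> + 1) / (2 * Nw)"
  define u where "u = (\<lambda>j. of_real (- s) * wc j)"
  define v where "v = (\<lambda>j. cnj (\<phi> j))"
  have "qf (partial_transpose_Y \<rho>) (mk u v) (mk u v) = of_real (- s * Nw) + of_real (- s * Nw) + qf C \<phi> \<phi>"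
    unfolding qf_PT_expand pc_mk0 pc_mk1
    unfolding u_def v_def pv_scale bc_scale pv_wc bc_wc pv_cphi by simp
  hence "Re (qf (partial_transpose_Y \<rho>) (mk u v) (mk u v)) = - 2 * s * Nw + Re (qf C \<phi> \<phi>)" by simp
  also have "\<dots> = - (\<bar>Re (qf C \<phi> \<phi>)\<bar> + 1) + Re (qf C \<phi> \<phi>)" unfolding s_def using Np by simp
  also have "\<dots> < 0" by simp
  finally have neg: "Re (qf (partial_transpose_Y \<rho>) (mk u v) (mk u v)) < 0" .
  show ?thesis unfolding NPT_def using psdD[of "partial_transpose_Y \<rho>" "mk u v"] neg by auto
qed

lemma bet_wc0: "wc = (\<lambda>_. 0) \<Longrightarrow> bet j = gam * cnj (\<phi> j)"
  using fun_cong[of wc "\<lambda>_. 0" j] unfolding wc_def by simp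

lemma C_bound: assumes "wc = (\<lambda>_. 0)"
  shows "(cmod gam)^2 * (cmod (inner_c \<phi> y))^2 / a \<le> Re (qf C y y)"
proof -
  define r where "r = gam * inner_c \<phi> y"
  have bvy: "bv y = r" unfolding r_def bv_def bet_wc0[OF assms] inner_c_def
    by (simp add: sum_distrib_left mult_ac)
  define t where "t = - r / of_real a"
  have rr2: "(complex_of_real (cmod r))^2 = r * cnj r" by (metis complex_norm_square of_real_power)
  have ipt: "inner_c \<phi> (\<lambda>i. t * \<phi> i) = t"
    using inner_add_right[of \<phi> "\<lambda>_. 0" t \<phi>] unit_phi by (simp add: inner_c_def)
  have "0 \<le> Re (qf \<rho> (mk (\<lambda>i. t * \<phi> i) y) (mk (\<lambda>i. t * \<phi> i) y))" using psdD[OF rho_psd] by blast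
  also have "qf \<rho> (mk (\<lambda>i. t * \<phi> i) y) (mk (\<lambda>i. t * \<phi> i) y) = of_real a * cnj t * t + cnj t * r + cnj (cnj t * r) + qf C y y"
    unfolding qf_rho_mk qfA qfB ipt bvy ..
  also have "\<dots> = of_real ((cmod r)^2 / a) - 2 * of_real ((cmod r)^2 / a) + qf C y y"
    unfolding t_def using a_pos by (simp add: rr2 field_simps)
  finally have "0 \<le> (cmod r)^2 / a - 2 * ((cmod r)^2 / a) + Re (qf C y y)" by simp
  moreover have "(cmod r)^2 = (cmod gam)^2 * (cmod (inner_c \<phi> y))^2" unfolding r_def norm_mult power_mult_distrib ..
  ultimately show ?thesis by (simp add: mult.commute)
qed

end


context ST begin

lemma ppt_if: assumes "wc = (\<lambda>_. 0)" shows "\<not> NPT \<rho>"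
proof -
  have bc0: "\<And>u. bc u = cnj gam * pv u"
    unfolding bc_def pv_def bet_wc0[OF assms] by (simp add: sum_distrib_left mult_ac)
  have "psd (partial_transpose_Y \<rho>)"
  proof (rule psdI)
    fix x
    define p0 where "p0 = pv (pc \<alpha>0 x)"
    define p1 where "p1 = pv (pc \<alpha>1 x)"
    define y where "y = (\<lambda>j. cnj (pc \<alpha>1 x j))"
    define z where "z = gam * cnj p0 * p1"
    have ipy: "inner_c \<phi> y = cnj p1" unfolding y_def p1_def pv_def inner_c_def by simp
    have Q: "qf (partial_transpose_Y \<rho>) x x = of_real a * cnj p0 * p0 + z + cnj z + qf C y y"
      unfolding qf_PT_expand bc0 p0_def[symmetric] p1_def[symmetric] y_def[symmetric] z_def
      by (simp add: mult_ac)
    have p0sq: "cnj p0 * p0 = of_real ((cmod p0)^2)" by (metis complex_norm_square mult.commute)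
    have CB: "(cmod gam)^2 * (cmod p1)^2 / a \<le> Re (qf C y y)"
      using C_bound[OF assms, of y] unfolding ipy by simp
    have zb: "- cmod z \<le> Re z" using abs_Re_le_cmod[of z] by linarith
    have cz: "cmod z = cmod p0 * (cmod gam * cmod p1)" unfolding z_def by (simp add: norm_mult)
    define X where "X = cmod p0"
    define Y where "Y = cmod gam * cmod p1"
    have amgm: "0 \<le> a * X^2 - 2 * X * Y + Y^2 / a"
    proof -
      have "a * X^2 - 2 * X * Y + Y^2 / a = (a * X - Y)^2 / a" using a_pos by (simp add: field_simps power2_eq_square)
      thus ?thesis using a_pos by simp
    qed
    have ReQ: "Re (qf (partial_transpose_Y \<rho>) x x) = a * (cmod p0)^2 + 2 * Re z + Re (qf C y y)"
      unfolding Q mult.assoc p0sq by simp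
    show "Im (qf (partial_transpose_Y \<rho>) x x) = 0 \<and> 0 \<le> Re (qf (partial_transpose_Y \<rho>) x x)"
    proof
      show "Im (qf (partial_transpose_Y \<rho>) x x) = 0" unfolding Q p0sq using psd_C[of y] by simp
      have "Y^2 / a \<le> Re (qf C y y)" using CB unfolding Y_def by (simp add: power_mult_distrib)
      thus "0 \<le> Re (qf (partial_transpose_Y \<rho>) x x)" unfolding ReQ using zb cz amgm
        unfolding X_def[symmetric] Y_def[symmetric] by linarith
    qed
  qed
  thus ?thesis unfolding NPT_def by simp
qed

end


context ST begin

definition "P1 = (\<lambda>j j'. \<phi> j * cnj (\<phi> j'))"
definition "P2 = (\<lambda>j j'. id_mat j j' - \<phi> j * cnj (\<phi> j'))"

lemma ip_def': "inner_c \<phi> v = (\<Sum>j\<in>UNIV. cnj (\<phi> j) * v j)" by (simp add: inner_c_def)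

lemma mat_apply_A: "mat_apply A v = (\<lambda>j. of_real a * \<phi> j * inner_c \<phi> v)"
  unfolding mat_apply_def A_def A_rank1 inner_c_def by (simp add: sum_distrib_left mult_ac)

lemma mat_apply_P1: "mat_apply P1 v = (\<lambda>j. \<phi> j * inner_c \<phi> v)"
  unfolding mat_apply_def P1_def inner_c_def by (simp add: sum_distrib_left mult_ac)

lemma id_apply: "(\<Sum>j'\<in>UNIV. id_mat j j' * (v::'i::finite cvec) j') = v j"
proof -
  have "(\<Sum>j'\<in>UNIV. id_mat j j' * v j') = (\<Sum>j'\<in>UNIV. if j' = j then v j' else 0)"
    unfolding id_mat_def by (intro sum.cong refl) auto
  also have "\<dots> = v j" by simp
  finally show ?thesis .
qed

lemma mat_apply_P2: "mat_apply P2 v = (\<lambda>j. v j - \<phi> j * inner_c \<phi> v)"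
proof
  fix j
  have "mat_apply P2 v j = (\<Sum>j'\<in>UNIV. id_mat j j' * v j') - (\<Sum>j'\<in>UNIV. \<phi> j * cnj (\<phi> j') * v j')"
    unfolding mat_apply_def P2_def by (simp add: left_diff_distrib sum_subtractf)
  thus "mat_apply P2 v j = v j - \<phi> j * inner_c \<phi> v"
    unfolding id_apply inner_c_def by (simp add: sum_distrib_left mult_ac)
qed

lemma ip_phi_scale: "inner_c \<phi> (\<lambda>j. \<phi> j * c) = c"
  using inner_add_right[of \<phi> "\<lambda>_. 0" c \<phi>] unit_phi by (simp add: inner_c_def mult.commute)

lemma ip_P2: "inner_c \<phi> (mat_apply P2 v) = 0"
proof -
  have "inner_c \<phi> (\<lambda>j. v j + (- inner_c \<phi> v) * \<phi> j) = 0"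
    unfolding inner_add_right unit_phi by simp
  thus ?thesis unfolding mat_apply_P2 by (simp add: mult.commute)
qed

lemma phi_nz: "\<exists>j. \<phi> j \<noteq> 0"
  using unit_phi unfolding inner_c_def by (metis (no_types, lifting) mult_zero_right sum.neutral zero_neq_one)

lemma range_A: "range_c A = {w. \<exists>c. w = (\<lambda>j. \<phi> j * c)}"
proof (intro set_eqI iffI)
  fix w assume "w \<in> range_c A"
  then obtain v where "w = mat_apply A v" unfolding range_c_def by auto
  thus "w \<in> {w. \<exists>c. w = (\<lambda>j. \<phi> j * c)}" unfolding mat_apply_A
    by (auto intro!: exI[of _ "of_real a * inner_c \<phi> v"] simp: mult_ac)
next
  fix w assume "w \<in> {w. \<exists>c. w = (\<lambda>j. \<phi> j * c)}"
  then obtain c where c: "w = (\<lambda>j. \<phi> j * c)" by auto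
  have "mat_apply A (\<lambda>j. \<phi> j * (c / of_real a)) = w"
    unfolding mat_apply_A ip_phi_scale c using a_pos by (simp add: field_simps)
  thus "w \<in> range_c A" unfolding range_c_def by (metis rangeI)
qed

lemma range_P1: "range_c P1 = {w. \<exists>c. w = (\<lambda>j. \<phi> j * c)}"
proof (intro set_eqI iffI)
  fix w assume "w \<in> range_c P1"
  then obtain v where "w = mat_apply P1 v" unfolding range_c_def by auto
  thus "w \<in> {w. \<exists>c. w = (\<lambda>j. \<phi> j * c)}" unfolding mat_apply_P1 by auto
next
  fix w assume "w \<in> {w. \<exists>c. w = (\<lambda>j. \<phi> j * c)}"
  then obtain c where c: "w = (\<lambda>j. \<phi> j * c)" by auto
  have "mat_apply P1 (\<lambda>j. \<phi> j * c) = w"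
    unfolding mat_apply_P1 ip_phi_scale c ..
  thus "w \<in> range_c P1" unfolding range_c_def by (metis rangeI)
qed

lemma ker_A: "ker_c A = {v. inner_c \<phi> v = 0}"
proof (intro set_eqI iffI)
  fix v assume "v \<in> ker_c A"
  hence h0: "mat_apply A v = (\<lambda>_. 0)" unfolding ker_c_def by simp
  have h: "\<And>j. of_real a * \<phi> j * inner_c \<phi> v = 0" using fun_cong[OF h0] unfolding mat_apply_A by simp
  obtain j where "\<phi> j \<noteq> 0" using phi_nz by auto
  thus "v \<in> {v. inner_c \<phi> v = 0}" using h[of j] a_pos by simp
next
  fix v assume "v \<in> {v. inner_c \<phi> v = 0}"
  thus "v \<in> ker_c A" unfolding ker_c_def mat_apply_A by simp
qed

lemma range_P2: "range_c P2 = {v. inner_c \<phi> v = 0}"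
proof (intro set_eqI iffI)
  fix w assume "w \<in> range_c P2"
  thus "w \<in> {v. inner_c \<phi> v = 0}" unfolding range_c_def using ip_P2 by auto
next
  fix w assume "w \<in> {v. inner_c \<phi> v = 0}"
  hence "mat_apply P2 w = w" unfolding mat_apply_P2 by simp
  thus "w \<in> range_c P2" unfolding range_c_def by (metis rangeI)
qed

lemma P1_idem: "mmult P1 P1 = P1"
proof (intro ext)
  fix i c
  have "(\<lambda>u. mmult P1 P1 u c) = mat_apply P1 (mat_apply P1 (evec c))" unfolding mmult_col mat_apply_ev ..
  also have "\<dots> = mat_apply P1 (evec c)" unfolding mat_apply_P1 ip_phi_scale ..
  finally show "mmult P1 P1 i c = P1 i c" unfolding mat_apply_ev by (rule fun_cong)
qed

lemma P2_idem: "mmult P2 P2 = P2"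
proof (intro ext)
  fix i c
  have "(\<lambda>u. mmult P2 P2 u c) = mat_apply P2 (mat_apply P2 (evec c))" unfolding mmult_col mat_apply_ev ..
  also have "\<dots> = mat_apply P2 (evec c)" using ip_P2[of "evec c"] unfolding mat_apply_P2[of "mat_apply P2 (evec c)"] by simp
  finally show "mmult P2 P2 i c = P2 i c" unfolding mat_apply_ev by (rule fun_cong)
qed

lemma P1_proj: "orth_proj (range_c A) = P1"
  by (rule orth_proj_eq) (simp add: is_orth_proj_onto_def P1_idem range_P1 range_A, simp add: adjoint_def P1_def mult.commute)

lemma P2_adj: "adjoint P2 = P2"
  unfolding adjoint_def P2_def id_mat_def by (intro ext) (auto simp: mult.commute)

lemma P2_proj: "orth_proj (ker_c A) = P2"
  by (rule orth_proj_eq) (simp add: is_orth_proj_onto_def P2_idem range_P2 ker_A P2_adj)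

lemma iii_prod: "mmult (mmult P1 B) P2 = (\<lambda>j j'. \<phi> j * wc j')"
proof (intro ext)
  fix i j
  have PB: "\<And>k. mmult P1 B i k = \<phi> i * bet k"
  proof -
    fix k
    have "mmult P1 B i k = \<phi> i * bet k * (\<Sum>j\<in>UNIV. \<phi> j * cnj (\<phi> j))"
      unfolding mmult_def P1_def B_struct by (simp add: sum_distrib_left mult_ac)
    thus "mmult P1 B i k = \<phi> i * bet k" unfolding phi_norm by simp
  qed
  have "mmult (mmult P1 B) P2 i j = (\<Sum>k\<in>UNIV. \<phi> i * bet k * id_mat k j) - \<phi> i * (\<Sum>k\<in>UNIV. bet k * \<phi> k) * cnj (\<phi> j)"
  proof -
    have "mmult (mmult P1 B) P2 i j = (\<Sum>k\<in>UNIV. \<phi> i * bet k * id_mat k j - \<phi> i * bet k * (\<phi> k * cnj (\<phi> j)))"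
      unfolding mmult_def[of "mmult P1 B"] PB P2_def by (simp add: right_diff_distrib)
    also have "\<dots> = (\<Sum>k\<in>UNIV. \<phi> i * bet k * id_mat k j) - (\<Sum>k\<in>UNIV. \<phi> i * bet k * (\<phi> k * cnj (\<phi> j)))"
      by (rule sum_subtractf)
    also have "(\<Sum>k\<in>UNIV. \<phi> i * bet k * (\<phi> k * cnj (\<phi> j))) = \<phi> i * (\<Sum>k\<in>UNIV. bet k * \<phi> k) * cnj (\<phi> j)"
      by (simp add: sum_distrib_left sum_distrib_right mult_ac)
    finally show ?thesis .
  qed
  also have "(\<Sum>k\<in>UNIV. \<phi> i * bet k * id_mat k j) = \<phi> i * bet j"
  proof -
    have "(\<Sum>k\<in>UNIV. \<phi> i * bet k * id_mat k j) = (\<Sum>k\<in>UNIV. if k = j then \<phi> i * bet k else 0)"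
      unfolding id_mat_def by (intro sum.cong refl) auto
    thus ?thesis by simp
  qed
  finally show "mmult (mmult P1 B) P2 i j = \<phi> i * wc j"
    unfolding wc_def gam_def bv_def by (simp add: right_diff_distrib mult_ac)
qed

lemma iii_iff: "mmult (mmult (orth_proj (range_c (partial_braket \<alpha>0 \<rho> \<alpha>0))) (partial_braket \<alpha>0 \<rho> \<alpha>1))
                  (orth_proj (ker_c (partial_braket \<alpha>0 \<rho> \<alpha>0))) \<noteq> (\<lambda>_ _. 0) \<longleftrightarrow> wc \<noteq> (\<lambda>_. 0)"
proof -
  have e: "mmult (mmult (orth_proj (range_c (partial_braket \<alpha>0 \<rho> \<alpha>0))) (partial_braket \<alpha>0 \<rho> \<alpha>1))
                  (orth_proj (ker_c (partial_braket \<alpha>0 \<rho> \<alpha>0))) = (\<lambda>j j'. \<phi> j * wc j')"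
    using P1_proj P2_proj iii_prod unfolding A_def B_def by simp
  obtain j0 where j0: "\<phi> j0 \<noteq> 0" using phi_nz by auto
  show ?thesis unfolding e
  proof
    assume "(\<lambda>j j'. \<phi> j * wc j') \<noteq> (\<lambda>_ _. 0)"
    thus "wc \<noteq> (\<lambda>_. 0)" by auto
  next
    assume "wc \<noteq> (\<lambda>_. 0)"
    then obtain k where "wc k \<noteq> 0" by auto
    hence "\<phi> j0 * wc k \<noteq> 0" using j0 by simp
    thus "(\<lambda>j j'. \<phi> j * wc j') \<noteq> (\<lambda>_ _. 0)" by (metis (mono_tags))
  qed
qed

end


lemma steer_abstract:
  fixes \<mu> :: "'l measure" and f :: "'l \<Rightarrow> real" and q :: "real \<Rightarrow> 'l \<Rightarrow> real"
  assumes ps: "prob_space \<mu>"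
    and fm: "f \<in> borel_measurable \<mu>" and f0: "\<And>l. l \<in> space \<mu> \<Longrightarrow> 0 \<le> f l"
    and q01: "\<And>e l. 0 < e \<Longrightarrow> e \<le> e0 \<Longrightarrow> l \<in> space \<mu> \<Longrightarrow> 0 \<le> q e l \<and> q e l \<le> 1"
    and int1: "\<And>e. 0 < e \<Longrightarrow> e \<le> e0 \<Longrightarrow> integrable \<mu> (\<lambda>l. q e l * sqrt (f l))"
    and int2: "\<And>e. 0 < e \<Longrightarrow> e \<le> e0 \<Longrightarrow> integrable \<mu> (\<lambda>l. q e l * f l)"
    and lower: "\<And>e. 0 < e \<Longrightarrow> e \<le> e0 \<Longrightarrow> c1 * e \<le> integral\<^sup>L \<mu> (\<lambda>l. q e l * sqrt (f l))"
    and upper: "\<And>e. 0 < e \<Longrightarrow> e \<le> e0 \<Longrightarrow> integral\<^sup>L \<mu> (\<lambda>l. q e l * f l) \<le> c2 * e^2"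
    and c1: "c1 > 0" and c2: "c2 \<ge> 0" and e0: "e0 > 0"
  shows False
proof -
  interpret prob_space \<mu> by (rule ps)
  define t where "t = 2 * c2 / c1 + 1"
  have tpos: "t > 0" unfolding t_def using c1 c2 by (simp add: add_nonneg_pos)
  have ct: "c2 / t \<le> c1 / 2"
  proof -
    have "c2 * 2 \<le> c1 * t" unfolding t_def using c1 c2 by (simp add: field_simps)
    thus ?thesis using tpos by (simp add: field_simps)
  qed
  define E where "E = (\<lambda>\<eta>::real. {l \<in> space \<mu>. 0 < f l \<and> f l < \<eta>^2})"
  have Esets: "\<And>\<eta>. E \<eta> \<in> sets \<mu>" unfolding E_def using fm by measurable
  have key: "c1 / (2 * t) \<le> measure \<mu> (E (t * e))" if e: "0 < e" "e \<le> e0" for e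
  proof -
    define \<eta> where "\<eta> = t * e"
    have etap: "\<eta> > 0" unfolding \<eta>_def using tpos e by simp
    have pw: "q e l * sqrt (f l) \<le> \<eta> * indicator (E \<eta>) l + q e l * f l / \<eta>" if l: "l \<in> space \<mu>" for l
    proof -
      have q: "0 \<le> q e l" "q e l \<le> 1" using q01[OF e l] by auto
      have fl: "0 \<le> f l" using f0[OF l] .
      show ?thesis
      proof (cases "f l < \<eta>^2")
        case True
        show ?thesis
        proof (cases "f l = 0")
          case True thus ?thesis using q etap by (simp add: indicator_def)
        next
          case False
          hence inE: "l \<in> E \<eta>" unfolding E_def using \<open>f l < \<eta>^2\<close> fl l by simp
          have "sqrt (f l) < \<eta>" using \<open>f l < \<eta>^2\<close> etap fl by (metis real_sqrt_less_iff real_sqrt_abs abs_of_pos)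
          moreover have "q e l * sqrt (f l) \<le> sqrt (f l)" using q fl by (intro mult_left_le_one_le) auto
          ultimately have "q e l * sqrt (f l) \<le> \<eta>" by linarith
          moreover have "0 \<le> q e l * f l / \<eta>" using q fl etap by simp
          ultimately show ?thesis using inE by simp
        qed
      next
        case False
        hence "\<eta> \<le> sqrt (f l)" using etap by (metis linorder_not_less real_le_rsqrt less_imp_le)
        hence "sqrt (f l) * \<eta> \<le> sqrt (f l) * sqrt (f l)" using fl by (intro mult_left_mono) auto
        moreover have "sqrt (f l) * sqrt (f l) = f l" using fl by simp
        ultimately have "sqrt (f l) * \<eta> \<le> f l" by linarith
        hence "sqrt (f l) \<le> f l / \<eta>" using etap by (simp add: field_simps)
        hence "q e l * sqrt (f l) \<le> q e l * (f l / \<eta>)" using q by (intro mult_left_mono) auto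
        moreover have "0 \<le> \<eta> * indicator (E \<eta>) l" using etap by simp
        ultimately show ?thesis by simp
      qed
    qed
    have intr: "integrable \<mu> (\<lambda>l. \<eta> * indicator (E \<eta>) l + q e l * f l / \<eta>)"
      using int2[OF e] Esets by (intro Bochner_Integration.integrable_add integrable_mult_right integrable_divide_zero) (auto simp: emeasure_eq_measure)
    have "c1 * e \<le> integral\<^sup>L \<mu> (\<lambda>l. q e l * sqrt (f l))" by (rule lower[OF e])
    also have "\<dots> \<le> integral\<^sup>L \<mu> (\<lambda>l. \<eta> * indicator (E \<eta>) l + q e l * f l / \<eta>)"
      by (rule integral_mono[OF int1[OF e] intr pw])
    also have "\<dots> = \<eta> * measure \<mu> (E \<eta>) + integral\<^sup>L \<mu> (\<lambda>l. q e l * f l) / \<eta>"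
    proof -
      have i1: "integrable \<mu> (\<lambda>l. \<eta> * indicator (E \<eta>) l)"
        using Esets by (intro integrable_mult_right) (auto simp: emeasure_eq_measure)
      have i2: "integrable \<mu> (\<lambda>l. q e l * f l / \<eta>)"
        using int2[OF e] by (intro integrable_divide_zero)
      have EE: "E \<eta> \<inter> space \<mu> = E \<eta>" unfolding E_def by auto
      show ?thesis
        unfolding Bochner_Integration.integral_add[OF i1 i2] integral_mult_right_zero integral_divide_zero
        using EE by simp
    qed
    also have "\<dots> \<le> \<eta> * measure \<mu> (E \<eta>) + c2 * e^2 / \<eta>"
      using upper[OF e] etap by (simp add: divide_right_mono)
    finally have "c1 * e \<le> t * e * measure \<mu> (E \<eta>) + (c2 / t) * e"
      unfolding \<eta>_def using e tpos by (simp add: power2_eq_square)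
    hence "c1 * e \<le> (t * measure \<mu> (E \<eta>) + c2 / t) * e" by (simp add: algebra_simps)
    hence "c1 \<le> t * measure \<mu> (E \<eta>) + c2 / t" by (rule mult_right_le_imp_le[OF _ e(1)])
    hence "c1 / 2 \<le> t * measure \<mu> (E \<eta>)" using ct by linarith
    thus ?thesis unfolding \<eta>_def using tpos by (simp add: field_simps)
  qed
  define En where "En = (\<lambda>n::nat. E (t * (e0 / Suc n)))"
  have lim: "(\<lambda>n. measure \<mu> (En n)) \<longlonglongrightarrow> measure \<mu> (\<Inter> (range En))"
  proof (rule finite_Lim_measure_decseq)
    show "range En \<subseteq> sets \<mu>" unfolding En_def using Esets by auto
    show "antimono_on UNIV En"
    proof (rule antimonoI)
      fix m n :: nat assume "m \<le> n"
      hence "t * (e0 / Suc n) \<le> t * (e0 / Suc m)" using tpos e0 by (simp add: frac_le)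
      hence "(t * (e0 / Suc n))^2 \<le> (t * (e0 / Suc m))^2" using tpos e0 by (simp add: power_mono)
      thus "En n \<subseteq> En m" unfolding En_def E_def by auto
    qed
  qed
  have empty: "\<Inter> (range En) = {}"
  proof (rule ccontr)
    assume "\<Inter> (range En) \<noteq> {}"
    then obtain l where l: "\<And>n. l \<in> En n" by blast
    hence fpos: "0 < f l" unfolding En_def E_def by auto
    have l0: "(\<lambda>n. e0 / real (Suc n)) \<longlonglongrightarrow> 0"
      using LIMSEQ_Suc[OF lim_const_over_n[of e0]] by simp
    have "(\<lambda>n. t * (e0 / Suc n)) \<longlonglongrightarrow> t * 0"
      by (intro tendsto_mult tendsto_const l0)
    hence sq: "(\<lambda>n. (t * (e0 / Suc n))^2) \<longlonglongrightarrow> 0" by (metis tendsto_power power_zero_numeral mult_zero_right)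
    have fle: "\<forall>n. f l \<le> (t * (e0 / Suc n))^2" using l unfolding En_def E_def by (simp add: less_imp_le)
    have "f l \<le> 0" using LIMSEQ_le_const[OF sq, of "f l"] fle by blast
    thus False using fpos by simp
  qed
  have lim0: "(\<lambda>n. measure \<mu> (En n)) \<longlonglongrightarrow> 0" using lim unfolding empty by simp
  have "c1 / (2 * t) \<le> 0"
  proof (rule LIMSEQ_le_const[OF lim0])
    show "\<exists>N. \<forall>n\<ge>N. c1 / (2 * t) \<le> measure \<mu> (En n)"
    proof (intro exI allI impI)
      fix n :: nat
      have a1: "0 < e0 / Suc n" using e0 by simp
      have a2: "e0 / Suc n \<le> e0" using e0 by (simp add: field_simps)
      show "c1 / (2 * t) \<le> measure \<mu> (En n)" unfolding En_def by (rule key[OF a1 a2])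
    qed
  qed
  thus False using c1 tpos by (simp add: field_simps)
qed



lemma density_diag: assumes "density_op T" shows "0 \<le> Re (T j j) \<and> Re (T j j) \<le> 1 \<and> Im (T j j) = 0"
proof -
  have ps: "psd T" using assms by (simp add: density_op_def)
  have d: "0 \<le> Re (T k k) \<and> Im (T k k) = 0" for k using psdD[OF ps, of "evec k"] unfolding qf_ev by simp
  have "Re (trace_c T) = 1" using assms by (simp add: density_op_def)
  hence s: "(\<Sum>k\<in>UNIV. Re (T k k)) = 1" unfolding trace_c_def by (simp add: Re_sum)
  have "Re (T j j) \<le> (\<Sum>k\<in>UNIV. Re (T k k))" by (rule member_le_sum) (use d in auto)
  thus ?thesis using d s by simp
qed

lemma density_entry: assumes "density_op T" shows "cmod (T j j') \<le> 1"
proof -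
  have ps: "psd T" using assms by (simp add: density_op_def)
  have "(cmod (T j j'))^2 \<le> Re (T j j) * Re (T j' j')" using psd_CS[OF ps, of "evec j" "evec j'"] unfolding qf_ev .
  also have "\<dots> \<le> 1 * 1" using density_diag[OF assms, of j] density_diag[OF assms, of j'] by (intro mult_mono) auto
  finally have "(cmod (T j j'))^2 \<le> 1^2" by simp
  thus ?thesis by (rule power2_le_imp_le) simp
qed

lemma density_qf_bound: assumes "density_op T"
  shows "cmod (qf T x y) \<le> (\<Sum>i\<in>UNIV. cmod (x i)) * (\<Sum>j\<in>UNIV. cmod (y j))"
proof -
  have "cmod (qf T x y) \<le> (\<Sum>i\<in>UNIV. \<Sum>j\<in>UNIV. cmod (cnj (x i) * T i j * y j))"
    unfolding qf_def by (rule order_trans[OF norm_sum sum_mono[OF norm_sum]])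
  also have "\<dots> \<le> (\<Sum>i\<in>UNIV. \<Sum>j\<in>UNIV. cmod (x i) * cmod (y j))"
  proof (intro sum_mono)
    fix i j
    have "cmod (cnj (x i) * T i j * y j) = cmod (x i) * cmod (T i j) * cmod (y j)" by (simp add: norm_mult)
    also have "\<dots> \<le> cmod (x i) * 1 * cmod (y j)"
      using density_entry[OF assms, of i j] by (intro mult_right_mono mult_left_mono) auto
    finally show "cmod (cnj (x i) * T i j * y j) \<le> cmod (x i) * cmod (y j)" by simp
  qed
  also have "\<dots> = (\<Sum>i\<in>UNIV. cmod (x i)) * (\<Sum>j\<in>UNIV. cmod (y j))" by (simp add: sum_product)
  finally show ?thesis .
qed

lemma id_apply_left: "(\<Sum>k\<in>UNIV. id_mat i k * (X::'i::finite \<Rightarrow> complex) k) = X i"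
proof -
  have "(\<Sum>k\<in>UNIV. id_mat i k * X k) = (\<Sum>k\<in>UNIV. if k = i then X k else 0)"
    unfolding id_mat_def by (intro sum.cong refl) auto
  also have "\<dots> = X i" by simp
  finally show ?thesis .
qed

lemma id_apply_right: "(\<Sum>k\<in>UNIV. (X::'i::finite \<Rightarrow> complex) k * id_mat k j) = X j"
proof -
  have "(\<Sum>k\<in>UNIV. X k * id_mat k j) = (\<Sum>k\<in>UNIV. if k = j then X k else 0)"
    unfolding id_mat_def by (intro sum.cong refl) auto
  also have "\<dots> = X j" by simp
  finally show ?thesis .
qed

definition rk1 :: "('i::finite) cvec \<Rightarrow> real \<Rightarrow> 'i cmat" where
  "rk1 \<psi> r = (\<lambda>i k. \<psi> i * cnj (\<psi> k) / of_real r)"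

lemma rk1_proj: assumes "inner_c \<psi> \<psi> = of_real r" "r > 0" shows "is_orth_proj (rk1 \<psi> r)"
proof -
  have "adjoint (rk1 \<psi> r) = rk1 \<psi> r" unfolding adjoint_def rk1_def by (intro ext) (simp add: mult.commute)
  moreover have "mmult (rk1 \<psi> r) (rk1 \<psi> r) = rk1 \<psi> r"
  proof (intro ext)
    fix i j
    have "mmult (rk1 \<psi> r) (rk1 \<psi> r) i j = \<psi> i * cnj (\<psi> j) * inner_c \<psi> \<psi> / (of_real r * of_real r)"
      unfolding mmult_def rk1_def inner_c_def by (simp add: sum_distrib_left sum_divide_distrib mult_ac)
    thus "mmult (rk1 \<psi> r) (rk1 \<psi> r) i j = rk1 \<psi> r i j" unfolding assms(1) rk1_def using assms(2) by simp
  qed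
  ultimately show ?thesis unfolding is_orth_proj_def by simp
qed

lemma compl_proj: assumes "is_orth_proj P" shows "is_orth_proj (\<lambda>i k. id_mat i k - (P::'i::finite cmat) i k)"
proof -
  have a: "adjoint P = P" and m: "mmult P P = P" using assms unfolding is_orth_proj_def by auto
  have "adjoint (\<lambda>i k. id_mat i k - P i k) = (\<lambda>i k. id_mat i k - P i k)"
    using a unfolding adjoint_def id_mat_def by (auto simp: fun_eq_iff)
  moreover have "mmult (\<lambda>i k. id_mat i k - P i k) (\<lambda>i k. id_mat i k - P i k) = (\<lambda>i k. id_mat i k - P i k)"
  proof (intro ext)
    fix i j
    have "mmult (\<lambda>i k. id_mat i k - P i k) (\<lambda>i k. id_mat i k - P i k) i j =
      (\<Sum>k\<in>UNIV. id_mat i k * id_mat k j) - (\<Sum>k\<in>UNIV. id_mat i k * P k j) - (\<Sum>k\<in>UNIV. P i k * id_mat k j) + mmult P P i j"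
      unfolding mmult_def by (simp add: algebra_simps sum_subtractf sum.distrib)
    thus "mmult (\<lambda>i k. id_mat i k - P i k) (\<lambda>i k. id_mat i k - P i k) i j = id_mat i j - P i j"
      unfolding id_apply_left id_apply_right m by simp
  qed
  ultimately show ?thesis unfolding is_orth_proj_def by simp
qed

lemma two_meas: assumes "is_orth_proj P" shows "proj_meas [P, (\<lambda>i k. id_mat i k - (P::'i::finite cmat) i k)]"
proof -
  have "\<forall>a<2. is_orth_proj ([P, (\<lambda>i k. id_mat i k - P i k)] ! a)"
    using assms compl_proj[OF assms] by (auto simp: less_2_cases_iff)
  moreover have "(\<lambda>i j. \<Sum>a<2. ([P, (\<lambda>i k. id_mat i k - P i k)] ! a) i j) = id_mat"
    by (simp add: numeral_2_eq_2)
  ultimately show ?thesis unfolding proj_meas_def by simp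
qed



lemma lhs_facts:
  assumes "lhs_model \<mu> \<tau> p \<rho>" "proj_meas M" "a < length M"
  shows "prob_space \<mu>" "\<And>l. l \<in> space \<mu> \<Longrightarrow> density_op (\<tau> l)"
    "\<And>j j'. (\<lambda>l. \<tau> l j j') \<in> borel_measurable \<mu>"
    "(\<lambda>l. p M a l) \<in> borel_measurable \<mu>"
    "\<And>l. l \<in> space \<mu> \<Longrightarrow> 0 \<le> p M a l \<and> p M a l \<le> 1"
    "\<And>j j'. assemblage \<rho> (M ! a) j j' = integral\<^sup>L \<mu> (\<lambda>l. complex_of_real (p M a l) * \<tau> l j j')"
proof -
  note L = assms(1)[unfolded lhs_model_def]
  show "prob_space \<mu>" "\<And>l. l \<in> space \<mu> \<Longrightarrow> density_op (\<tau> l)" "\<And>j j'. (\<lambda>l. \<tau> l j j') \<in> borel_measurable \<mu>"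
    using L by auto
  show "(\<lambda>l. p M a l) \<in> borel_measurable \<mu>" using L assms(2,3) by auto
  show "\<And>j j'. assemblage \<rho> (M ! a) j j' = integral\<^sup>L \<mu> (\<lambda>l. complex_of_real (p M a l) * \<tau> l j j')"
    using L assms(2,3) by auto
  fix l assume l: "l \<in> space \<mu>"
  have nn: "\<forall>b<length M. 0 \<le> p M b l" and s1: "(\<Sum>b<length M. p M b l) = 1" using L assms(2) l by auto
  have "p M a l \<le> (\<Sum>b<length M. p M b l)" by (rule member_le_sum) (use nn assms(3) in auto)
  thus "0 \<le> p M a l \<and> p M a l \<le> 1" using nn assms(3) s1 by auto
qed

lemma lhs_entry_integrable:
  assumes "lhs_model \<mu> \<tau> p \<rho>" "proj_meas M" "a < length M"
  shows "integrable \<mu> (\<lambda>l. complex_of_real (p M a l) * \<tau> l j j')"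
proof -
  note F = lhs_facts[OF assms]
  interpret prob_space \<mu> by (rule F(1))
  have m1: "(\<lambda>l. p M a l) \<in> borel_measurable \<mu>" by (rule F(4))
  have m2: "(\<lambda>l. \<tau> l j j') \<in> borel_measurable \<mu>" by (rule F(3))
  have m: "(\<lambda>l. complex_of_real (p M a l) * \<tau> l j j') \<in> borel_measurable \<mu>"
    using m1 m2 by measurable
  have b: "AE l in \<mu>. norm (complex_of_real (p M a l) * \<tau> l j j') \<le> 1"
  proof (rule AE_I2)
    fix l assume l: "l \<in> space \<mu>"
    have "norm (complex_of_real (p M a l) * \<tau> l j j') = \<bar>p M a l\<bar> * cmod (\<tau> l j j')" by (simp add: norm_mult)
    also have "\<dots> \<le> 1 * 1" using F(5)[OF l] density_entry[OF F(2)[OF l], of j j'] by (intro mult_mono) auto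
    finally show "norm (complex_of_real (p M a l) * \<tau> l j j') \<le> 1" by simp
  qed
  show ?thesis by (rule integrable_const_bound[OF b m])
qed

lemma lhs_qf:
  assumes "lhs_model \<mu> \<tau> p \<rho>" "proj_meas M" "a < length M"
  shows "qf (assemblage \<rho> (M!a)) x y = integral\<^sup>L \<mu> (\<lambda>l. complex_of_real (p M a l) * qf (\<tau> l) x y)"
    "integrable \<mu> (\<lambda>l. complex_of_real (p M a l) * qf (\<tau> l) x y)"
proof -
  note F = lhs_facts[OF assms]
  define G where "G = (\<lambda>j j' l. cnj (x j) * (complex_of_real (p M a l) * \<tau> l j j') * y j')"
  have I: "\<And>j j'. integrable \<mu> (G j j')"
    unfolding G_def using lhs_entry_integrable[OF assms] by auto
  have I2: "\<And>j. integrable \<mu> (\<lambda>l. \<Sum>j'\<in>UNIV. G j j' l)" by (rule Bochner_Integration.integrable_sum, rule I)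
  have eq: "\<And>l. complex_of_real (p M a l) * qf (\<tau> l) x y = (\<Sum>j\<in>UNIV. \<Sum>j'\<in>UNIV. G j j' l)"
    unfolding qf_def G_def by (simp add: sum_distrib_left mult_ac)
  have "qf (assemblage \<rho> (M!a)) x y = (\<Sum>j\<in>UNIV. \<Sum>j'\<in>UNIV. integral\<^sup>L \<mu> (G j j'))"
    unfolding qf_def F(6) G_def by simp
  also have "\<dots> = (\<Sum>j\<in>UNIV. integral\<^sup>L \<mu> (\<lambda>l. \<Sum>j'\<in>UNIV. G j j' l))"
  proof -
    have S1: "\<And>j. integral\<^sup>L \<mu> (\<lambda>l. \<Sum>j'\<in>UNIV. G j j' l) = (\<Sum>j'\<in>UNIV. integral\<^sup>L \<mu> (G j j'))"
      by (rule Bochner_Integration.integral_sum) (rule I)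
    show ?thesis by (simp add: S1)
  qed
  also have "\<dots> = integral\<^sup>L \<mu> (\<lambda>l. \<Sum>j\<in>UNIV. \<Sum>j'\<in>UNIV. G j j' l)"
    by (rule Bochner_Integration.integral_sum[symmetric]) (rule I2)
  also have "\<dots> = integral\<^sup>L \<mu> (\<lambda>l. complex_of_real (p M a l) * qf (\<tau> l) x y)" unfolding eq ..
  finally show "qf (assemblage \<rho> (M!a)) x y = integral\<^sup>L \<mu> (\<lambda>l. complex_of_real (p M a l) * qf (\<tau> l) x y)" .
  show "integrable \<mu> (\<lambda>l. complex_of_real (p M a l) * qf (\<tau> l) x y)"
    unfolding eq by (rule Bochner_Integration.integrable_sum, rule I2)
qed



lemma inner_add_left: "inner_c (\<lambda>i. x i + c * y i) z = inner_c x z + cnj c * inner_c y z"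
  unfolding inner_c_def by (simp add: ring_distribs sum.distrib sum_distrib_left mult_ac)

lemma qf_div: "qf (\<lambda>j j'. M j j' / c) x y = qf M x y / c"
  unfolding qf_def by (simp add: sum_divide_distrib)

lemma assemblage_rk1: "assemblage \<rho> (rk1 \<psi> r) = (\<lambda>j j'. partial_braket \<psi> \<rho> \<psi> j j' / of_real r)"
  unfolding assemblage_def rk1_def partial_braket_def
  by (intro ext) (simp add: sum_divide_distrib mult_ac, rule sum.swap)

lemma qf_pb: "qf (partial_braket \<psi> \<rho> \<psi>) x y = qf \<rho> (\<lambda>(i,j). \<psi> i * x j) (\<lambda>(i,j). \<psi> i * y j)"
proof -
  have "qf (partial_braket \<psi> \<rho> \<psi>) x y = (\<Sum>j\<in>UNIV. \<Sum>j'\<in>UNIV. \<Sum>i\<in>UNIV. \<Sum>i'\<in>UNIV. cnj (\<psi> i * x j) * \<rho> (i,j) (i',j') * (\<psi> i' * y j'))"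
    unfolding qf_def partial_braket_def by (simp add: sum_distrib_left sum_distrib_right mult_ac)
  also have "\<dots> = (\<Sum>i\<in>UNIV. \<Sum>j\<in>UNIV. \<Sum>i'\<in>UNIV. \<Sum>j'\<in>UNIV. cnj (\<psi> i * x j) * \<rho> (i,j) (i',j') * (\<psi> i' * y j'))"
    by (rule sum4_reorder)
  also have "\<dots> = qf \<rho> (\<lambda>(i,j). \<psi> i * x j) (\<lambda>(i,j). \<psi> i * y j)"
    unfolding qf_def sum_UNIV_pair by (simp add: sum_distrib_left sum_distrib_right)
  finally show ?thesis .
qed

context ST begin

definition "psi e = (\<lambda>i. \<alpha>0 i + of_real e * \<alpha>1 i)"
definition "Me e = [rk1 (psi e) (1 + e^2), (\<lambda>i k. id_mat i k - rk1 (psi e) (1 + e^2) i k)]"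

lemma inner_psi: "inner_c (psi e) (psi e) = of_real (1 + e^2)"
  unfolding psi_def inner_add_left inner_add_right on00 on01 on10 on11 by (simp add: power2_eq_square)

lemma Me_meas: "proj_meas (Me e)"
  unfolding Me_def by (rule two_meas, rule rk1_proj[OF inner_psi]) (simp add: add_pos_nonneg)

lemma psi_mk: "(\<lambda>(i,j). psi e i * x j) = mk x (\<lambda>j. of_real e * x j)"
  unfolding psi_def mk_def by (auto simp: fun_eq_iff algebra_simps)

lemma qf_sigma: "qf (assemblage \<rho> (Me e ! 0)) x y =
   (qf A x y + of_real e * qf B x y + of_real e * qf D x y + of_real (e^2) * qf C x y) / of_real (1 + e^2)"
proof -
  have "qf (assemblage \<rho> (Me e ! 0)) x y = qf \<rho> (mk x (\<lambda>j. of_real e * x j)) (mk y (\<lambda>j. of_real e * y j)) / of_real (1 + e^2)"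
    unfolding Me_def nth_Cons_0 assemblage_rk1 qf_div qf_pb psi_mk ..
  also have "qf \<rho> (mk x (\<lambda>j. of_real e * x j)) (mk y (\<lambda>j. of_real e * y j)) = qf A x y + of_real e * qf B x y + of_real e * qf D x y + of_real (e^2) * qf C x y"
    unfolding qf_rho pc_mk0 pc_mk1 qf_scale_left qf_scale_right by (simp add: power2_eq_square)
  finally show ?thesis .
qed

definition "wv = (\<lambda>j. cnj (wc j))"

lemma ip_wv: "inner_c \<phi> wv = 0"
proof -
  have "inner_c \<phi> wv = cnj (pv wc)" unfolding inner_c_def wv_def pv_def by simp
  thus ?thesis unfolding pv_wc by simp
qed

lemma bv_wv: "bv wv = of_real Nw"
proof -
  have "bv wv = cnj (bc wc)" unfolding bv_def bc_def wv_def by simp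
  thus ?thesis unfolding bc_wc by simp
qed

lemma G_eq: "qf (assemblage \<rho> (Me e ! 0)) \<phi> wv = (of_real (e * Nw) + of_real (e^2) * qf C \<phi> wv) / of_real (1 + e^2)"
proof -
  have "qf A \<phi> wv = 0" unfolding qfA ip_wv by simp
  moreover have "qf B \<phi> wv = of_real Nw" unfolding qfB unit_phi bv_wv by simp
  moreover have "qf D \<phi> wv = 0" unfolding qf_adj[of D B, OF D_eq] qfB ip_wv by simp
  ultimately show ?thesis unfolding qf_sigma by simp
qed

lemma F_eq: "qf (assemblage \<rho> (Me e ! 0)) wv wv = of_real (e^2) * qf C wv wv / of_real (1 + e^2)"
proof -
  have "qf A wv wv = 0" unfolding qfA ip_wv by simp
  moreover have "qf B wv wv = 0" unfolding qfB ip_wv by simp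
  moreover have "qf D wv wv = 0" unfolding qf_adj[of D B, OF D_eq] qfB ip_wv by simp
  ultimately show ?thesis unfolding qf_sigma by simp
qed

end


context ST begin

lemma lhs_wc0:
  assumes lhs: "lhs_model \<mu> \<tau> p \<rho>"
  shows "wc = (\<lambda>_. 0)"
proof (rule ccontr)
  assume wc0: "wc \<noteq> (\<lambda>_. 0)"
  have Np: "Nw > 0" using Nw_pos[OF wc0] .
  have ps: "prob_space \<mu>" using lhs unfolding lhs_model_def by simp
  interpret prob_space \<mu> by (rule ps)
  have dens: "\<And>l. l \<in> space \<mu> \<Longrightarrow> density_op (\<tau> l)" using lhs unfolding lhs_model_def by simp
  have taum: "\<And>j j'. (\<lambda>l. \<tau> l j j') \<in> borel_measurable \<mu>" using lhs unfolding lhs_model_def by simp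
  define S\<phi> where "S\<phi> = (\<Sum>j\<in>UNIV. cmod (\<phi> j))"
  define Sw where "Sw = (\<Sum>j\<in>UNIV. cmod (wv j))"
  have S\<phi>pos: "S\<phi> > 0"
  proof -
    obtain j where "\<phi> j \<noteq> 0" using phi_nz by auto
    hence "0 < cmod (\<phi> j)" by simp
    also have "cmod (\<phi> j) \<le> S\<phi>" unfolding S\<phi>_def by (rule member_le_sum) auto
    finally show ?thesis .
  qed
  define Kc where "Kc = qf C \<phi> wv"
  define c where "c = qf C wv wv"
  have c_real: "Im c = 0" "0 \<le> Re c" using psd_C[of wv] unfolding c_def by auto
  define f where "f = (\<lambda>l. Re (qf (\<tau> l) wv wv))"
  define q where "q = (\<lambda>e l. p (Me e) 0 l)"
  define e0 where "e0 = min 1 (Nw / (2 * (cmod Kc + 1)))"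
  have e0pos: "e0 > 0"
  proof -
    have h2: "0 < 2 * (cmod Kc + 1)" by (smt (verit) norm_ge_zero)
    have "0 < Nw / (2 * (cmod Kc + 1))" using Np h2 by (rule divide_pos_pos)
    thus ?thesis unfolding e0_def by simp
  qed
  have fm: "f \<in> borel_measurable \<mu>"
  proof -
    have "(\<lambda>l. qf (\<tau> l) wv wv) \<in> borel_measurable \<mu>" unfolding qf_def using taum by measurable
    thus ?thesis unfolding f_def by measurable
  qed
  have f0: "\<And>l. l \<in> space \<mu> \<Longrightarrow> 0 \<le> f l"
    unfolding f_def using dens psdD unfolding density_op_def by blast
  have fS: "\<And>l. l \<in> space \<mu> \<Longrightarrow> f l \<le> Sw * Sw"
  proof -
    fix l assume l: "l \<in> space \<mu>"
    have "f l \<le> cmod (qf (\<tau> l) wv wv)" unfolding f_def by (rule complex_Re_le_cmod)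
    also have "\<dots> \<le> Sw * Sw" unfolding Sw_def by (rule density_qf_bound[OF dens[OF l]])
    finally show "f l \<le> Sw * Sw" .
  qed
  have Sw0: "0 \<le> Sw" unfolding Sw_def by (simp add: sum_nonneg)
  have meas: "\<And>e. proj_meas (Me e)" by (rule Me_meas)
  have len: "\<And>e. 0 < length (Me e)" unfolding Me_def by simp
  note LF = lhs_facts[OF lhs meas len]
  note LQ = lhs_qf[OF lhs meas len]
  have qm: "\<And>e. q e \<in> borel_measurable \<mu>" unfolding q_def using LF(4) by simp
  have q01: "\<And>e l. 0 < e \<Longrightarrow> e \<le> e0 \<Longrightarrow> l \<in> space \<mu> \<Longrightarrow> 0 \<le> q e l \<and> q e l \<le> 1"
    unfolding q_def using LF(5) by blast
  have q01': "\<And>e l. l \<in> space \<mu> \<Longrightarrow> 0 \<le> q e l \<and> q e l \<le> 1"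
    unfolding q_def using LF(5) by blast
  have int1: "\<And>e. integrable \<mu> (\<lambda>l. q e l * sqrt (f l))"
  proof -
    fix e
    have m: "(\<lambda>l. q e l * sqrt (f l)) \<in> borel_measurable \<mu>" using qm[of e] fm by measurable
    have b: "AE l in \<mu>. norm (q e l * sqrt (f l)) \<le> Sw"
    proof (rule AE_I2)
      fix l assume l: "l \<in> space \<mu>"
      have "sqrt (f l) \<le> sqrt (Sw * Sw)" using fS[OF l] by (rule real_sqrt_le_mono)
      hence sf: "sqrt (f l) \<le> Sw" using Sw0 by simp
      have "norm (q e l * sqrt (f l)) = q e l * sqrt (f l)" using q01'[OF l, of e] f0[OF l] by simp
      also have "\<dots> \<le> 1 * Sw" using q01'[OF l, of e] sf f0[OF l] by (intro mult_mono) auto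
      finally show "norm (q e l * sqrt (f l)) \<le> Sw" by simp
    qed
    show "integrable \<mu> (\<lambda>l. q e l * sqrt (f l))" by (rule integrable_const_bound[OF b m])
  qed
  have qfeq: "\<And>e. (\<lambda>l. q e l * f l) = (\<lambda>l. Re (complex_of_real (q e l) * qf (\<tau> l) wv wv))"
    unfolding q_def f_def by simp
  have int2: "\<And>e. integrable \<mu> (\<lambda>l. q e l * f l)"
    unfolding qfeq using LQ(2) unfolding q_def by (rule integrable_Re)
  have upper: "\<And>e. 0 < e \<Longrightarrow> e \<le> e0 \<Longrightarrow> integral\<^sup>L \<mu> (\<lambda>l. q e l * f l) \<le> Re c * e^2"
  proof -
    fix e :: real assume e: "0 < e" "e \<le> e0"
    have "integral\<^sup>L \<mu> (\<lambda>l. q e l * f l) = integral\<^sup>L \<mu> (\<lambda>l. Re (complex_of_real (q e l) * qf (\<tau> l) wv wv))"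
      by (subst qfeq) (rule refl)
    also have "\<dots> = Re (qf (assemblage \<rho> (Me e ! 0)) wv wv)"
      unfolding LQ(1) q_def by (rule integral_Re[OF LQ(2)])
    also have "\<dots> = e^2 * Re c / (1 + e^2)" unfolding F_eq c_def[symmetric] by (simp add: Re_divide_of_real)
    also have "\<dots> \<le> e^2 * Re c"
    proof -
      have X: "0 \<le> e^2 * Re c" using c_real by simp
      have "e^2 * Re c / (1 + e^2) \<le> e^2 * Re c / 1"
        by (rule divide_left_mono) (use X in \<open>auto simp: add_pos_nonneg\<close>)
      thus ?thesis by simp
    qed
    finally show "integral\<^sup>L \<mu> (\<lambda>l. q e l * f l) \<le> Re c * e^2" by (simp add: mult.commute)
  qed
  have lower: "\<And>e. 0 < e \<Longrightarrow> e \<le> e0 \<Longrightarrow> (Nw / (4 * S\<phi>)) * e \<le> integral\<^sup>L \<mu> (\<lambda>l. q e l * sqrt (f l))"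
  proof -
    fix e :: real assume e: "0 < e" "e \<le> e0"
    have e1: "e \<le> 1" using e unfolding e0_def by simp
    have eK: "e * cmod Kc \<le> Nw / 2"
    proof -
      have "e * cmod Kc \<le> (Nw / (2 * (cmod Kc + 1))) * cmod Kc" using e unfolding e0_def by (intro mult_right_mono) auto
      also have "\<dots> \<le> Nw / 2"
      proof -
        have pos1: "0 < cmod Kc + 1" by (smt (verit) norm_ge_zero)
        have "cmod Kc / (cmod Kc + 1) \<le> 1" using pos1 by (simp add: divide_le_eq)
        hence "Nw / 2 * (cmod Kc / (cmod Kc + 1)) \<le> Nw / 2 * 1" using Np by (intro mult_left_mono) auto
        thus ?thesis by (simp add: field_simps)
      qed
      finally show ?thesis .
    qed
    have "e * Nw - e^2 * cmod Kc \<le> cmod (of_real (e * Nw) + of_real (e^2) * Kc)"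
    proof -
      have "cmod (of_real (e * Nw) :: complex) - cmod (of_real (e^2) * Kc) \<le> cmod (of_real (e * Nw) + of_real (e^2) * Kc)"
        by (rule norm_diff_ineq)
      moreover have "cmod (of_real (e * Nw) :: complex) = e * Nw" using e Np by (simp only: norm_of_real) simp
      moreover have "cmod (of_real (e^2) * Kc) = e^2 * cmod Kc" by (simp only: norm_mult norm_of_real) simp
      ultimately show ?thesis by simp
    qed
    moreover have "e^2 * cmod Kc \<le> e * (Nw / 2)" using eK e by (simp add: power2_eq_square mult.assoc mult_left_mono)
    ultimately have A1: "e * Nw / 2 \<le> cmod (of_real (e * Nw) + of_real (e^2) * Kc)" by simp
    have "e * Nw / 4 \<le> cmod (of_real (e * Nw) + of_real (e^2) * Kc) / (1 + e^2)"
    proof -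
      have "1 + e^2 \<le> 2" using e1 e by (simp add: power_le_one)
      hence "e * Nw / 4 * (1 + e^2) \<le> e * Nw / 2" using e Np by (simp add: mult_left_mono)
      hence "e * Nw / 4 * (1 + e^2) \<le> cmod (of_real (e * Nw) + of_real (e^2) * Kc)" using A1 by linarith
      thus ?thesis by (simp add: le_divide_eq add_pos_nonneg)
    qed
    also have "\<dots> = cmod (qf (assemblage \<rho> (Me e ! 0)) \<phi> wv)"
    proof -
      have n1: "cmod (of_real (1 + e^2) :: complex) = 1 + e^2"
        by (simp only: norm_of_real) (rule abs_of_nonneg, simp)
      show ?thesis unfolding G_eq Kc_def[symmetric] norm_divide n1 ..
    qed
    also have "\<dots> = cmod (integral\<^sup>L \<mu> (\<lambda>l. complex_of_real (q e l) * qf (\<tau> l) \<phi> wv))" unfolding LQ(1) q_def ..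
    also have "\<dots> \<le> integral\<^sup>L \<mu> (\<lambda>l. cmod (complex_of_real (q e l) * qf (\<tau> l) \<phi> wv))" by (rule integral_norm_bound)
    also have "\<dots> \<le> integral\<^sup>L \<mu> (\<lambda>l. S\<phi> * (q e l * sqrt (f l)))"
    proof (rule integral_mono)
      show "integrable \<mu> (\<lambda>l. cmod (complex_of_real (q e l) * qf (\<tau> l) \<phi> wv))"
        using LQ(2) unfolding q_def by (rule integrable_norm)
      show "integrable \<mu> (\<lambda>l. S\<phi> * (q e l * sqrt (f l)))" using int1 by (rule integrable_mult_right)
      fix l assume l: "l \<in> space \<mu>"
      have psl: "psd (\<tau> l)" using dens[OF l] unfolding density_op_def by simp
      have "(cmod (qf (\<tau> l) \<phi> wv))^2 \<le> Re (qf (\<tau> l) \<phi> \<phi>) * f l" unfolding f_def by (rule psd_CS[OF psl])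
      also have "\<dots> \<le> (S\<phi> * S\<phi>) * f l"
      proof (rule mult_right_mono)
        have "Re (qf (\<tau> l) \<phi> \<phi>) \<le> cmod (qf (\<tau> l) \<phi> \<phi>)" by (rule complex_Re_le_cmod)
        also have "\<dots> \<le> S\<phi> * S\<phi>" unfolding S\<phi>_def by (rule density_qf_bound[OF dens[OF l]])
        finally show "Re (qf (\<tau> l) \<phi> \<phi>) \<le> S\<phi> * S\<phi>" .
        show "0 \<le> f l" by (rule f0[OF l])
      qed
      finally have "cmod (qf (\<tau> l) \<phi> wv) \<le> sqrt ((S\<phi> * S\<phi>) * f l)" by (rule real_le_rsqrt)
      also have "\<dots> = S\<phi> * sqrt (f l)" using S\<phi>pos by (simp add: real_sqrt_mult)
      finally have gb: "cmod (qf (\<tau> l) \<phi> wv) \<le> S\<phi> * sqrt (f l)" .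
      have "cmod (complex_of_real (q e l) * qf (\<tau> l) \<phi> wv) = q e l * cmod (qf (\<tau> l) \<phi> wv)"
        using q01'[OF l, of e] by (simp add: norm_mult)
      also have "\<dots> \<le> q e l * (S\<phi> * sqrt (f l))" using q01'[OF l, of e] gb by (intro mult_left_mono) auto
      finally show "cmod (complex_of_real (q e l) * qf (\<tau> l) \<phi> wv) \<le> S\<phi> * (q e l * sqrt (f l))" by (simp add: mult_ac)
    qed
    also have "\<dots> = S\<phi> * integral\<^sup>L \<mu> (\<lambda>l. q e l * sqrt (f l))" by simp
    finally have "e * Nw / 4 \<le> S\<phi> * integral\<^sup>L \<mu> (\<lambda>l. q e l * sqrt (f l))" .
    thus "(Nw / (4 * S\<phi>)) * e \<le> integral\<^sup>L \<mu> (\<lambda>l. q e l * sqrt (f l))" using S\<phi>pos by (simp add: field_simps)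
  qed
  show False
  proof (rule steer_abstract[OF ps fm f0 q01 int1 int2 lower upper])
    show "0 < Nw / (4 * S\<phi>)" using Np S\<phi>pos by simp
    show "0 \<le> Re c" by (rule c_real(2))
    show "0 < e0" by (rule e0pos)
  qed
qed

end


lemma rk1_density: assumes "inner_c \<xi> \<xi> = of_real N" "N > 0" shows "density_op (rk1 \<xi> N)"
proof -
  have q: "qf (rk1 \<xi> N) v v = of_real ((cmod (inner_c \<xi> v))^2 / N)" for v
  proof -
    have "qf (rk1 \<xi> N) v v = cnj (inner_c \<xi> v) * inner_c \<xi> v / of_real N"
      unfolding qf_def rk1_def inner_c_def by (simp add: sum_distrib_left sum_distrib_right sum_divide_distrib mult_ac, rule sum.swap)
    also have "cnj (inner_c \<xi> v) * inner_c \<xi> v = of_real ((cmod (inner_c \<xi> v))^2)" by (metis complex_norm_square mult.commute)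
    finally show ?thesis by simp
  qed
  have "psd (rk1 \<xi> N)" by (rule psdI) (use assms(2) in \<open>simp add: q\<close>)
  moreover have "trace_c (rk1 \<xi> N) = 1"
  proof -
    have "trace_c (rk1 \<xi> N) = cnj (inner_c \<xi> \<xi>) / of_real N"
      unfolding trace_c_def rk1_def inner_c_def by (simp add: sum_divide_distrib mult_ac)
    thus ?thesis using assms by simp
  qed
  ultimately show ?thesis unfolding density_op_def by simp
qed

lemma psd_trace0: assumes "psd M" "trace_c M = 0" shows "M = (\<lambda>_ _. 0)"
proof (intro ext)
  fix j j'
  have d: "0 \<le> Re (M k k) \<and> Im (M k k) = 0" for k using psdD[OF assms(1), of "evec k"] unfolding qf_ev by simp
  have "(\<Sum>k\<in>UNIV. Re (M k k)) = 0" using assms(2) unfolding trace_c_def by (metis Re_sum zero_complex.sel(1))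
  hence z: "\<forall>k\<in>UNIV. Re (M k k) = 0" using d by (subst sum_nonneg_eq_0_iff[symmetric]) auto
  have "(cmod (M j j'))^2 \<le> Re (M j j) * Re (M j' j')" using psd_CS[OF assms(1), of "evec j" "evec j'"] unfolding qf_ev .
  hence "(cmod (M j j'))^2 \<le> 0" using z by simp
  thus "M j j' = 0" by simp
qed

lemma psd_scale: assumes "psd M" "t > 0" shows "density_op (\<lambda>j j'. M j j' / of_real t) \<longleftrightarrow> trace_c M = of_real t"
proof -
  have "psd (\<lambda>j j'. M j j' / of_real t)"
    by (rule psdI) (use psdD[OF assms(1)] assms(2) in \<open>simp add: qf_div Re_divide_of_real Im_divide_of_real\<close>)
  moreover have "trace_c (\<lambda>j j'. M j j' / of_real t) = trace_c M / of_real t"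
    unfolding trace_c_def by (simp add: sum_divide_distrib)
  ultimately show ?thesis unfolding density_op_def using assms(2) by auto
qed

lemma qf_lin: "qf (\<lambda>u w. M u w + c * N u w) x y = qf M x y + c * qf N x y"
  unfolding qf_def by (simp add: ring_distribs sum.distrib sum_distrib_left mult_ac)

lemma trace_tm: "trace_c (tm \<beta> \<gamma> R) = inner_c \<gamma> \<beta> * trace_c R"
  unfolding trace_c_def tm_def inner_c_def sum_UNIV_pair by (simp add: sum_product mult_ac, rule sum.swap)

lemma trace_plus: "trace_c (\<lambda>u w. M u w + N u w) = trace_c M + trace_c N"
  unfolding trace_c_def by (simp add: sum.distrib)

context ST begin

lemma qfP1: "qf P1 y y = cnj (inner_c \<phi> y) * inner_c \<phi> y"
  unfolding qf_def P1_def inner_c_def by (simp add: sum_distrib_left sum_distrib_right cnj_sum mult_ac, rule sum.swap)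

lemma trace_rho: "trace_c \<rho> = trace_c A + trace_c C"
proof -
  have "trace_c \<rho> = inner_c \<alpha>0 \<alpha>0 * trace_c A + inner_c \<alpha>1 \<alpha>0 * trace_c B + inner_c \<alpha>0 \<alpha>1 * trace_c D + inner_c \<alpha>1 \<alpha>1 * trace_c C"
    by (subst rho_decomp) (simp only: trace_plus trace_tm)
  thus ?thesis unfolding on00 on01 on10 on11 by simp
qed

lemma trace_A: "trace_c A = of_real a"
  unfolding trace_c_def A_def A_rank1 using phi_norm by (simp add: sum_distrib_left[symmetric] mult.assoc)


lemma wc0_separable: assumes wc0: "wc = (\<lambda>_. 0)" shows "separable \<rho>"
proof -
  define g2 where "g2 = (cmod gam)^2 / a"
  define C' where "C' = (\<lambda>j j'. C j j' + (- of_real g2) * P1 j j')"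
  define c where "c = cnj gam / of_real a"
  define \<xi> where "\<xi> = (\<lambda>i. \<alpha>0 i + c * \<alpha>1 i)"
  define N where "N = 1 + (cmod gam)^2 / a^2"
  have gg: "gam * cnj gam = of_real ((cmod gam)^2)" by (metis complex_norm_square)
  have Npos: "N > 0" unfolding N_def by (simp add: add_pos_nonneg)
  have inner_xi: "inner_c \<xi> \<xi> = of_real N"
  proof -
    have "inner_c \<xi> \<xi> = 1 + cnj c * c" unfolding \<xi>_def inner_add_left inner_add_right on00 on01 on10 on11 by simp
    also have "cnj c * c = gam * cnj gam / (of_real a)^2" unfolding c_def by (simp add: power2_eq_square mult_ac)
    finally show ?thesis unfolding gg N_def by simp
  qed
  have psdC': "psd C'"
  proof (rule psdI)
    fix y
    have e: "qf C' y y = qf C y y - of_real g2 * (cnj (inner_c \<phi> y) * inner_c \<phi> y)"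
      unfolding C'_def qf_lin qfP1 by simp
    have ip: "cnj (inner_c \<phi> y) * inner_c \<phi> y = of_real ((cmod (inner_c \<phi> y))^2)" by (metis complex_norm_square mult.commute)
    have "g2 * (cmod (inner_c \<phi> y))^2 \<le> Re (qf C y y)" using C_bound[OF wc0, of y] unfolding g2_def by simp
    thus "Im (qf C' y y) = 0 \<and> 0 \<le> Re (qf C' y y)" unfolding e ip using psd_C[of y] by simp
  qed
  define t where "t = Re (trace_c C')"
  have trC'_real: "trace_c C' = of_real t"
  proof -
    have "Im (trace_c C') = 0" unfolding trace_c_def Im_sum
      using psdD[OF psdC', of "evec _"] unfolding qf_ev by simp
    thus ?thesis unfolding t_def by (simp add: complex_eq_iff)
  qed
  have t0: "0 \<le> t" unfolding t_def trace_c_def Re_sum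
    using psdD[OF psdC', of "evec _"] unfolding qf_ev by (simp add: sum_nonneg)
  define T2 where "T2 = (if t = 0 then rk1 \<phi> 1 else (\<lambda>j j'. C' j j' / of_real t))"
  have unit_phi': "inner_c \<phi> \<phi> = of_real 1" using unit_phi by simp
  have T2d: "density_op T2"
  proof (cases "t = 0")
    case True thus ?thesis unfolding T2_def using rk1_density[OF unit_phi'] by simp
  next
    case False thus ?thesis unfolding T2_def using psd_scale[OF psdC', of t] t0 trC'_real by simp
  qed
  have T2e: "complex_of_real t * T2 j j' = C' j j'" for j j'
  proof (cases "t = 0")
    case True
    hence "C' = (\<lambda>_ _. 0)" using psd_trace0[OF psdC'] trC'_real by simp
    thus ?thesis using True by simp
  next
    case False thus ?thesis unfolding T2_def by simp
  qed
  define p where "p = (\<lambda>k::nat. if k = 0 then a * N else t)"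
  define S where "S = (\<lambda>k::nat. if k = 0 then rk1 \<xi> N else rk1 \<alpha>1 1)"
  define T where "T = (\<lambda>k::nat. if k = 0 then rk1 \<phi> 1 else T2)"
  have on11': "inner_c \<alpha>1 \<alpha>1 = of_real 1" using on11 by simp
  have dens: "\<forall>k<2. 0 \<le> p k \<and> density_op (S k) \<and> density_op (T k)"
    unfolding p_def S_def T_def using rk1_density[OF inner_xi Npos] rk1_density[OF on11'] rk1_density[OF unit_phi']
      T2d a_pos Npos t0 by (auto simp: less_2_cases_iff)
  have psum: "(\<Sum>k<2. p k) = 1"
  proof -
    have "trace_c \<rho> = 1" using state unfolding density_op_def by simp
    hence "of_real a + trace_c C = 1" using trace_rho trace_A by simp
    moreover have "trace_c C' = trace_c C - of_real g2"
    proof -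
      have "trace_c C' = trace_c C - of_real g2 * (\<Sum>i\<in>UNIV. \<phi> i * cnj (\<phi> i))"
        unfolding C'_def trace_c_def P1_def by (simp add: sum_subtractf sum_distrib_left)
      thus ?thesis unfolding phi_norm by simp
    qed
    ultimately have "t = 1 - a - g2" using trC'_real by (simp add: complex_eq_iff)
    moreover have "a * N = a + g2" unfolding N_def g2_def using a_pos by (simp add: field_simps power2_eq_square)
    ultimately show ?thesis unfolding p_def by (simp add: numeral_2_eq_2)
  qed
  have "\<rho> = (\<lambda>u w. \<Sum>k<2. complex_of_real (p k) * kron (S k) (T k) u w)"
  proof (intro ext)
    fix u w :: "'x \<times> 'y"
    obtain i j where u: "u = (i,j)" by force
    obtain i' j' where w: "w = (i',j')" by force
    have B': "B j j' = gam * \<phi> j * cnj (\<phi> j')" unfolding B_struct bet_wc0[OF wc0] by simp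
    have D': "D j j' = cnj gam * \<phi> j * cnj (\<phi> j')" unfolding D_eq B_struct bet_wc0[OF wc0] by simp
    have C'': "C j j' = C' j j' + of_real g2 * \<phi> j * cnj (\<phi> j')" unfolding C'_def P1_def by simp
    have A': "A j j' = of_real a * \<phi> j * cnj (\<phi> j')" unfolding A_def A_rank1 ..
    have k0: "complex_of_real (p 0) * kron (S 0) (T 0) u w = of_real a * \<xi> i * cnj (\<xi> i') * \<phi> j * cnj (\<phi> j')"
      unfolding p_def S_def T_def kron_def rk1_def u w using Npos by simp
    have k1: "complex_of_real (p 1) * kron (S 1) (T 1) u w = \<alpha>1 i * cnj (\<alpha>1 i') * C' j j'"
      unfolding p_def S_def T_def kron_def rk1_def u w using T2e[of j j'] by (simp add: mult_ac)
    have g2e: "of_real g2 = gam * cnj gam / of_real a" unfolding g2_def gg by simp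
    have "\<rho> u w = of_real a * \<xi> i * cnj (\<xi> i') * \<phi> j * cnj (\<phi> j') + \<alpha>1 i * cnj (\<alpha>1 i') * C' j j'"
      unfolding u w F1 A_def[symmetric] B_def[symmetric] C_def[symmetric] D_def[symmetric] A' B' C'' D' \<xi>_def c_def g2e
      using a_pos by (simp add: field_simps)
    also have "\<dots> = (\<Sum>k<2. complex_of_real (p k) * kron (S k) (T k) u w)"
      unfolding k0[symmetric] k1[symmetric] by (simp add: numeral_2_eq_2)
    finally show "\<rho> u w = (\<Sum>k<2. complex_of_real (p k) * kron (S k) (T k) u w)" .
  qed
  thus ?thesis unfolding separable_def using dens psum by blast
qed

end


lemma trace_proj_nonneg:
  assumes "psd S" "is_orth_proj P"
  shows "trace_c (mmult S P) = of_real (\<Sum>m\<in>UNIV. Re (qf S (\<lambda>k. P k m) (\<lambda>k. P k m)))"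
    "0 \<le> (\<Sum>m\<in>UNIV. Re (qf S (\<lambda>k. P k m) (\<lambda>k. P k m)))"
proof -
  have a: "adjoint P = P" and m: "mmult P P = P" using assms(2) unfolding is_orth_proj_def by auto
  have Pc: "cnj (P i m) = P m i" for i m using fun_cong[OF fun_cong[OF a, of m], of i] unfolding adjoint_def by simp
  have "(\<Sum>m\<in>UNIV. qf S (\<lambda>k. P k m) (\<lambda>k. P k m)) = (\<Sum>i\<in>UNIV. \<Sum>k\<in>UNIV. S i k * mmult P P k i)"
  proof -
    have "(\<Sum>m\<in>UNIV. qf S (\<lambda>k. P k m) (\<lambda>k. P k m)) = (\<Sum>m\<in>UNIV. \<Sum>i\<in>UNIV. \<Sum>k\<in>UNIV. S i k * (P k m * P m i))"
      unfolding qf_def Pc by (simp add: mult_ac)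
    also have "\<dots> = (\<Sum>i\<in>UNIV. \<Sum>m\<in>UNIV. \<Sum>k\<in>UNIV. S i k * (P k m * P m i))" by (rule sum.swap)
    also have "\<dots> = (\<Sum>i\<in>UNIV. \<Sum>k\<in>UNIV. \<Sum>m\<in>UNIV. S i k * (P k m * P m i))" by (rule sum.cong[OF refl], rule sum.swap)
    also have "\<dots> = (\<Sum>i\<in>UNIV. \<Sum>k\<in>UNIV. S i k * mmult P P k i)" unfolding mmult_def by (simp add: sum_distrib_left)
    finally show ?thesis .
  qed
  also have "\<dots> = trace_c (mmult S P)" unfolding m by (simp add: trace_c_def mmult_def)
  finally have e: "trace_c (mmult S P) = (\<Sum>m\<in>UNIV. qf S (\<lambda>k. P k m) (\<lambda>k. P k m))" ..
  have r: "qf S (\<lambda>k. P k m) (\<lambda>k. P k m) = of_real (Re (qf S (\<lambda>k. P k m) (\<lambda>k. P k m)))" for m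
    using psdD[OF assms(1), of "\<lambda>k. P k m"] by (simp add: complex_eq_iff)
  show "trace_c (mmult S P) = of_real (\<Sum>m\<in>UNIV. Re (qf S (\<lambda>k. P k m) (\<lambda>k. P k m)))"
    unfolding e of_real_sum using r by simp
  show "0 \<le> (\<Sum>m\<in>UNIV. Re (qf S (\<lambda>k. P k m) (\<lambda>k. P k m)))"
    using psdD[OF assms(1)] by (simp add: sum_nonneg)
qed

lemma trace_meas_sum:
  assumes "proj_meas M"
  shows "(\<Sum>a<length M. trace_c (mmult S (M ! a))) = trace_c (S::'x::finite cmat)"
proof -
  have I: "(\<lambda>i j. \<Sum>a<length M. (M ! a) i j) = id_mat" using assms unfolding proj_meas_def by simp
  have "(\<Sum>a<length M. trace_c (mmult S (M ! a))) = (\<Sum>i\<in>UNIV. \<Sum>k\<in>UNIV. S i k * (\<Sum>a<length M. (M ! a) k i))"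
    unfolding trace_c_def mmult_def by (simp add: sum_distrib_left sum.swap[of _ "{..<length M}"])
  also have "\<dots> = (\<Sum>i\<in>UNIV. \<Sum>k\<in>UNIV. S i k * id_mat k i)" using fun_cong[OF fun_cong[OF I]] by simp
  also have "\<dots> = trace_c S" unfolding trace_c_def id_apply_right ..
  finally show ?thesis .
qed

lemma proj_meas_len: "proj_meas (M :: ('x::finite) cmat list) \<Longrightarrow> 0 < length M"
proof (rule ccontr)
  assume pm: "proj_meas M" and "\<not> 0 < length M"
  hence "M = []" by simp
  hence "(\<lambda>i j. 0::complex) = (id_mat :: 'x cmat)" using pm unfolding proj_meas_def by simp
  hence "(0::complex) = id_mat (undefined::'x) undefined" by metis
  thus False unfolding id_mat_def by simp
qed

lemma assemblage_sep:
  "assemblage (\<lambda>u w. \<Sum>k<n. complex_of_real (pk k) * kron (S k) (T k) u w) Pm j j' =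
   (\<Sum>k<n. complex_of_real (pk k) * trace_c (mmult (S k) Pm) * T k j j')"
proof -
  have "assemblage (\<lambda>u w. \<Sum>k<n. complex_of_real (pk k) * kron (S k) (T k) u w) Pm j j' =
     (\<Sum>i\<in>UNIV. \<Sum>m\<in>UNIV. \<Sum>k<n. complex_of_real (pk k) * T k j j' * (S k m i * Pm i m))"
    unfolding assemblage_def kron_def by (simp add: sum_distrib_left mult_ac)
  also have "\<dots> = (\<Sum>i\<in>UNIV. \<Sum>k<n. \<Sum>m\<in>UNIV. complex_of_real (pk k) * T k j j' * (S k m i * Pm i m))"
    by (rule sum.cong[OF refl], rule sum.swap)
  also have "\<dots> = (\<Sum>k<n. \<Sum>i\<in>UNIV. \<Sum>m\<in>UNIV. complex_of_real (pk k) * T k j j' * (S k m i * Pm i m))"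
    by (rule sum.swap)
  also have "\<dots> = (\<Sum>k<n. \<Sum>m\<in>UNIV. \<Sum>i\<in>UNIV. complex_of_real (pk k) * T k j j' * (S k m i * Pm i m))"
    by (rule sum.cong[OF refl], rule sum.swap)
  also have "\<dots> = (\<Sum>k<n. complex_of_real (pk k) * trace_c (mmult (S k) Pm) * T k j j')"
    unfolding trace_c_def mmult_def by (simp add: sum_distrib_left mult_ac)
  finally show ?thesis .
qed

lemma pmf_list_filter:
  "filter (\<lambda>z. fst z = k) (map (\<lambda>k. (k, f k)) [0..<n]) = (if k < n then [(k, f k)] else [])"
  by (induction n) auto

lemma sep_lhs:
  fixes \<rho> :: "(('x::finite) \<times> ('y::finite)) cmat"
  assumes "separable \<rho>"
  shows "\<exists>(\<mu>::('x, 'y) hidden measure) \<tau> p. lhs_model \<mu> \<tau> p \<rho>"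
proof -
  from assms obtain n pk and S :: "nat \<Rightarrow> 'x cmat" and T :: "nat \<Rightarrow> 'y cmat" where H0: "(\<forall>k<n. 0 \<le> pk k \<and> density_op (S k) \<and> density_op (T k)) \<and> (\<Sum>k<n. pk k) = 1 \<and>
    \<rho> = (\<lambda>u w. \<Sum>k<n. complex_of_real (pk k) * kron (S k) (T k) u w)"
    unfolding separable_def by (elim exE) (erule that)
  note H = conjunct1[OF H0] conjunct1[OF conjunct2[OF H0]] conjunct2[OF conjunct2[OF H0]]
  have n0: "0 < n" using H(2) by (cases n) auto
  define resp where "resp = (\<lambda>k (M::'x cmat list) a. Re (trace_c (mmult (S k) (M ! a))))"
  define h :: "nat \<Rightarrow> ('x, 'y) hidden" where "h = (\<lambda>k. (T k, resp k))"
  define valid where "valid = (\<lambda>(r::'x cmat list \<Rightarrow> nat \<Rightarrow> real) M. (\<forall>a<length M. 0 \<le> r M a) \<and> (\<Sum>a<length M. r M a) = 1)"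
  define \<tau> :: "('x, 'y) hidden \<Rightarrow> 'y cmat" where "\<tau> = (\<lambda>l. if density_op (fst l) then fst l else T 0)"
  define p :: "'x cmat list \<Rightarrow> nat \<Rightarrow> ('x, 'y) hidden \<Rightarrow> real"
    where "p = (\<lambda>M a l. if valid (snd l) M then snd l M a else (if a = 0 then 1 else 0))"
  define xs where "xs = map (\<lambda>k. (k, pk k)) [0..<n]"
  have wf: "pmf_of_list_wf xs"
  proof (rule pmf_of_list_wfI)
    show "\<And>x. x \<in> set (map snd xs) \<Longrightarrow> 0 \<le> x" unfolding xs_def using H(1) by auto
    have "sum_list (map snd xs) = sum_list (map pk [0..<n])" unfolding xs_def by (simp add: comp_def)
    also have "\<dots> = (\<Sum>k<n. pk k)" by (simp add: sum_set_upt_conv_sum_list_nat[symmetric] atLeast0LessThan)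
    finally show "sum_list (map snd xs) = 1" using H(2) by simp
  qed
  define P where "P = pmf_of_list xs"
  have pmfP: "\<And>k. k < n \<Longrightarrow> pmf P k = pk k"
    unfolding P_def using pmf_pmf_of_list[OF wf] unfolding xs_def pmf_list_filter by simp
  have setP: "set_pmf P \<subseteq> {..<n}" unfolding P_def using set_pmf_of_list[OF wf] unfolding xs_def by auto
  define \<mu> where "\<mu> = measure_pmf (map_pmf h P)"
  have valid_k: "valid (resp k) M" if k: "k < n" and M: "proj_meas M" for k M
  proof -
    have Sk: "psd (S k)" using H(1) k unfolding density_op_def by auto
    have nn: "\<forall>a<length M. 0 \<le> resp k M a"
    proof (intro allI impI)
      fix a assume "a < length M"
      hence "is_orth_proj (M ! a)" using M unfolding proj_meas_def by auto
      thus "0 \<le> resp k M a" unfolding resp_def using trace_proj_nonneg[OF Sk] by simp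
    qed
    have "(\<Sum>a<length M. resp k M a) = Re (\<Sum>a<length M. trace_c (mmult (S k) (M ! a)))"
      unfolding resp_def by (simp add: Re_sum)
    also have "\<dots> = 1" unfolding trace_meas_sum[OF M] using H(1) k unfolding density_op_def by auto
    finally show ?thesis unfolding valid_def using nn by simp
  qed
  have "lhs_model \<mu> \<tau> p \<rho>"
    unfolding lhs_model_def
  proof (intro conjI)
    show "prob_space \<mu>" unfolding \<mu>_def by (rule prob_space_measure_pmf)
    show "\<forall>l\<in>space \<mu>. density_op (\<tau> l)" unfolding \<tau>_def using H(1) n0 by auto
    show "\<forall>j j'. (\<lambda>l. \<tau> l j j') \<in> borel_measurable \<mu>" unfolding \<mu>_def by simp
    show "\<forall>M. proj_meas M \<longrightarrow> (\<forall>a<length M. (\<lambda>l. p M a l) \<in> borel_measurable \<mu>) \<and>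
        (\<forall>l\<in>space \<mu>. (\<forall>a<length M. 0 \<le> p M a l) \<and> (\<Sum>a<length M. p M a l) = 1) \<and>
        (\<forall>a<length M. \<forall>j j'. assemblage \<rho> (M ! a) j j' = integral\<^sup>L \<mu> (\<lambda>l. complex_of_real (p M a l) * \<tau> l j j'))"
  proof (rule allI, rule impI, intro conjI)
    fix M :: "'x cmat list" assume M: "proj_meas M"
    have lenM: "0 < length M" by (rule proj_meas_len[OF M])
    show "\<forall>a<length M. (\<lambda>l. p M a l) \<in> borel_measurable \<mu>" unfolding \<mu>_def by simp
    show "\<forall>l\<in>space \<mu>. (\<forall>a<length M. 0 \<le> p M a l) \<and> (\<Sum>a<length M. p M a l) = 1"
    proof (intro ballI conjI)
      fix l
      show "\<forall>a<length M. 0 \<le> p M a l" unfolding p_def valid_def by auto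
      show "(\<Sum>a<length M. p M a l) = 1"
      proof (cases "valid (snd l) M")
        case True thus ?thesis unfolding p_def valid_def by simp
      next
        case False
        hence "(\<Sum>a<length M. p M a l) = (\<Sum>a<length M. if a = 0 then 1 else 0)" unfolding p_def by simp
        also have "\<dots> = 1" using lenM by simp
        finally show ?thesis .
      qed
    qed
    show "\<forall>a<length M. \<forall>j j'. assemblage \<rho> (M ! a) j j' = integral\<^sup>L \<mu> (\<lambda>l. complex_of_real (p M a l) * \<tau> l j j')"
    proof (intro allI impI)
      fix a j j' assume a: "a < length M"
      have "integral\<^sup>L \<mu> (\<lambda>l. complex_of_real (p M a l) * \<tau> l j j') = integral\<^sup>L P (\<lambda>k. complex_of_real (p M a (h k)) * \<tau> (h k) j j')"
        unfolding \<mu>_def by simp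
      also have "\<dots> = (\<Sum>k<n. pmf P k *\<^sub>R (complex_of_real (p M a (h k)) * \<tau> (h k) j j'))"
        by (rule integral_measure_pmf) (use setP in auto)
      also have "\<dots> = (\<Sum>k<n. complex_of_real (pk k) * trace_c (mmult (S k) (M ! a)) * T k j j')"
      proof (rule sum.cong[OF refl])
        fix k assume "k \<in> {..<n}"
        hence k: "k < n" by simp
        have tr: "trace_c (mmult (S k) (M ! a)) = of_real (resp k M a)"
        proof -
          have "is_orth_proj (M ! a)" using M a unfolding proj_meas_def by auto
          moreover have "psd (S k)" using H(1) k unfolding density_op_def by auto
          ultimately have e: "trace_c (mmult (S k) (M ! a)) = of_real (\<Sum>m\<in>UNIV. Re (qf (S k) (\<lambda>i. (M ! a) i m) (\<lambda>i. (M ! a) i m)))"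
            by (intro trace_proj_nonneg(1))
          show ?thesis unfolding resp_def e by simp
        qed
        have "p M a (h k) = resp k M a" unfolding p_def h_def using valid_k[OF k M] by simp
        moreover have "\<tau> (h k) = T k" unfolding \<tau>_def h_def using H(1) k by simp
        ultimately show "pmf P k *\<^sub>R (complex_of_real (p M a (h k)) * \<tau> (h k) j j') = complex_of_real (pk k) * trace_c (mmult (S k) (M ! a)) * T k j j'"
          unfolding tr pmfP[OF k] by (simp add: scaleR_conv_of_real mult_ac)
      qed
      also have "\<dots> = assemblage \<rho> (M ! a) j j'" unfolding H(3) assemblage_sep ..
      finally show "assemblage \<rho> (M ! a) j j' = integral\<^sup>L \<mu> (\<lambda>l. complex_of_real (p M a l) * \<tau> l j j')" ..
    qed
  qed
  qed
  thus ?thesis by blast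
qed


theorem mainTheorem5:
  fixes \<rho> :: "(('x::finite) \<times> ('y::finite)) cmat"
    and \<alpha>0 \<alpha>1 :: "'x cvec" and \<phi> :: "'y cvec" and a :: real
  assumes orthonormal: "inner_c \<alpha>0 \<alpha>0 = 1" "inner_c \<alpha>1 \<alpha>1 = 1" "inner_c \<alpha>0 \<alpha>1 = 0"
    and state: "density_op \<rho>"
    and support: "range_c \<rho> \<subseteq> span2_tensor \<alpha>0 \<alpha>1"
    and unit_phi: "inner_c \<phi> \<phi> = 1"
    and a_pos: "a > 0"
    and A_rank1: "partial_braket \<alpha>0 \<rho> \<alpha>0 = (\<lambda>j j'. complex_of_real a * \<phi> j * cnj (\<phi> j'))"
  shows "(entangled \<rho> \<longleftrightarrow> NPT \<rho>) \<and>
         (NPT \<rho> \<longleftrightarrow>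
            mmult (mmult (orth_proj (range_c (partial_braket \<alpha>0 \<rho> \<alpha>0))) (partial_braket \<alpha>0 \<rho> \<alpha>1))
                  (orth_proj (ker_c (partial_braket \<alpha>0 \<rho> \<alpha>0))) \<noteq> (\<lambda>_ _. 0)) \<and>
         (NPT \<rho> \<longleftrightarrow> proj_steerable \<rho>)"
proof -
  have st: "ST \<rho> \<alpha>0 \<alpha>1 \<phi> a" unfolding ST_def using assms by simp
  interpret ST \<rho> \<alpha>0 \<alpha>1 \<phi> a by (rule st)
  have e1: "NPT \<rho> \<longleftrightarrow> wc \<noteq> (\<lambda>_. 0)" using npt_if ppt_if by auto
  have e2: "entangled \<rho> \<longleftrightarrow> wc \<noteq> (\<lambda>_. 0)"
  proof
    assume "entangled \<rho>"
    thus "wc \<noteq> (\<lambda>_. 0)" using wc0_separable unfolding entangled_def by auto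
  next
    assume wc: "wc \<noteq> (\<lambda>_. 0)"
    show "entangled \<rho>" unfolding entangled_def
    proof
      assume "separable \<rho>"
      then obtain \<mu> :: "('x, 'y) hidden measure" and \<tau> p where "lhs_model \<mu> \<tau> p \<rho>" using sep_lhs by blast
      thus False using lhs_wc0 wc by blast
    qed
  qed
  have e3: "proj_steerable \<rho> \<longleftrightarrow> wc \<noteq> (\<lambda>_. 0)"
  proof
    assume ps: "proj_steerable \<rho>"
    show "wc \<noteq> (\<lambda>_. 0)"
    proof
      assume "wc = (\<lambda>_. 0)"
      hence "separable \<rho>" by (rule wc0_separable)
      hence "\<exists>(\<mu>::('x, 'y) hidden measure) \<tau> p. lhs_model \<mu> \<tau> p \<rho>" by (rule sep_lhs)
      thus False using ps unfolding proj_steerable_def by blast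
    qed
  next
    assume wc: "wc \<noteq> (\<lambda>_. 0)"
    show "proj_steerable \<rho>" unfolding proj_steerable_def using lhs_wc0 wc by blast
  qed
  show ?thesis using e1 e2 e3 iii_iff by blast
qed

end
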